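(* Let $k'\subset K'$ be a finite totally ramified extension of complete discrete valuation fields of degree $n'$, and let $i,j\in\mathbb Z$. Then: 1. $X_iX_j\subset X_{i+j}$; consequently $X_0$ is a subring of $K'\otimes_{k'}K'$ and each $X_i$ is an $X_0$-module. 2. $X_i/X_{i+1}$ is a free module of rank one over the ring $X_0/X_1$. 3. $X_i=\bigoplus_{l=0}^{n'-1}\pi'^l\otimes\mathfrak m'^{\,i-l}$. 4. For every $\varepsilon\in O_{K'}^*$ one has $\varepsilon\otimes\varepsilon^{-1}\in 1+X_1$. Consequently, for $x\in K'^*$ and $\varepsilon_1,\varepsilon_2\in O_{K'}^*$, the class of $\varepsilon_1x\otimes\varepsilon_2x^{-1}$ in $X_0/X_1$ equals the class of $(\varepsilon_1\varepsilon_2\otimes1)(\pi'\otimes\pi'^{-1})^{v'(x)}$, and the class of $x\otimes x^{-1}$ is $1$ if $n'\mid v'(x)$. 5. There is a unique isomorphism of unital $\bar k'$-algebras $r_X: X_0/X_1\to R'=\bar k'[X]/(X^{n'}-1)$ sending the class of $\pi'\otimes\pi'^{-1}$ to $X$; moreover this class and this isomorphism do not depend on the choice of the uniformizer $\pi'$. 6. $t$ is a ring automorphism of $K'\otimes_{k'}K'$ mapping each $X_i$ onto itself, and for every $\alpha\in X_0$ one has $r_X(t(\alpha))=r_X(\alpha)(X^{-1})$ (note $X$ is invertible in $R'$).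
   Context: $O_{K'}\supset O_{k'}$ are the rings of integers, $\mathfrak m'$ the maximal ideal of $O_{K'}$, $\bar k'$ the common residue field, $\pi'$ a uniformizer of $K'$, $v'$ the valuation of $K'$ with $v'(K'^* )=\mathbb Z$. All tensor products are over $k'$; for $O_{k'}$-submodules $A,B\subset K'$, $A\otimes B$ denotes the $O_{k'}$-submodule of $K'\otimes_{k'}K'$ generated by all $a\otimes b$, $a\in A,b\in B$. For $i\in\mathbb Z$, $X_i=\sum_{j\in\mathbb Z}\mathfrak m'^j\otimes\mathfrak m'^{\,i-j}\subset K'\otimes_{k'}K'$. $t$ denotes the $k'$-linear map $x\otimes y\mapsto y\otimes x$. $X_0/X_1$ is a $\bar k'$-algebra via $O_{k'}\to X_0$. *)

theory Defs
  imports "HOL-Computational_Algebra.Polynomial"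
begin

text \<open>K' is modelled by a field type 'a, k' by a subfield S of it, and v' by a function
 v :: 'a => int (its value at 0 is irrelevant).\<close>

definition subfield :: "'a::field set \<Rightarrow> bool" where
  "subfield S \<longleftrightarrow> 0 \<in> S \<and> 1 \<in> S \<and> (\<forall>x\<in>S. \<forall>y\<in>S. x + y \<in> S \<and> x * y \<in> S)
     \<and> (\<forall>x\<in>S. - x \<in> S \<and> inverse x \<in> S)"

definition mpow :: "('a::field \<Rightarrow> int) \<Rightarrow> int \<Rightarrow> 'a set" where
  "mpow v j = {x. x = 0 \<or> j \<le> v x}"

definition vring :: "('a::field \<Rightarrow> int) \<Rightarrow> 'a set" where
  "vring v = mpow v 0"

definition vunits :: "('a::field \<Rightarrow> int) \<Rightarrow> 'a set" where
  "vunits v = {x. x \<noteq> 0 \<and> v x = 0}"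

definition discrete_valuation :: "('a::field \<Rightarrow> int) \<Rightarrow> bool" where
  "discrete_valuation v \<longleftrightarrow>
     (\<forall>x y. x \<noteq> 0 \<longrightarrow> y \<noteq> 0 \<longrightarrow> v (x * y) = v x + v y)
   \<and> (\<forall>x y. x \<noteq> 0 \<longrightarrow> y \<noteq> 0 \<longrightarrow> x + y \<noteq> 0 \<longrightarrow> min (v x) (v y) \<le> v (x + y))
   \<and> (\<forall>k. \<exists>x. x \<noteq> 0 \<and> v x = k)"

definition v_cauchy :: "('a::field \<Rightarrow> int) \<Rightarrow> (nat \<Rightarrow> 'a) \<Rightarrow> bool" where
  "v_cauchy v X \<longleftrightarrow> (\<forall>N. \<exists>M. \<forall>p\<ge>M. \<forall>q\<ge>M. X p - X q \<in> mpow v N)"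

definition v_converges :: "('a::field \<Rightarrow> int) \<Rightarrow> (nat \<Rightarrow> 'a) \<Rightarrow> 'a \<Rightarrow> bool" where
  "v_converges v X L \<longleftrightarrow> (\<forall>N. \<exists>M. \<forall>p\<ge>M. X p - L \<in> mpow v N)"

definition v_complete_on :: "('a::field \<Rightarrow> int) \<Rightarrow> 'a set \<Rightarrow> bool" where
  "v_complete_on v S \<longleftrightarrow>
     (\<forall>X. (\<forall>n. X n \<in> S) \<longrightarrow> v_cauchy v X \<longrightarrow> (\<exists>L\<in>S. v_converges v X L))"

definition ext_degree :: "'a::field set \<Rightarrow> nat \<Rightarrow> bool" where
  "ext_degree S n \<longleftrightarrow> (\<exists>b :: nat \<Rightarrow> 'a.
      (\<forall>c. (\<forall>i<n. c i \<in> S) \<longrightarrow> (\<Sum>i<n. c i * b i) = 0 \<longrightarrow> (\<forall>i<n. c i = 0))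
    \<and> (\<forall>x. \<exists>c. (\<forall>i<n. c i \<in> S) \<and> x = (\<Sum>i<n. c i * b i)))"

text \<open>S \<subseteq> K' is a finite totally ramified extension of complete discrete valuation fields of
 degree n: both complete, [K':S] = n and ramification index n, i.e. v'(S^*) = n Z.\<close>
definition totally_ramified_cdvf :: "'a::field set \<Rightarrow> ('a \<Rightarrow> int) \<Rightarrow> nat \<Rightarrow> bool" where
  "totally_ramified_cdvf S v n \<longleftrightarrow>
     subfield S \<and> discrete_valuation v \<and> v_complete_on v UNIV \<and> v_complete_on v S
   \<and> ext_degree S n \<and> {v x | x. x \<in> S \<and> x \<noteq> 0} = {int n * z | z. True}"

text \<open>res : O_{K'} -> 'k realizes the residue field: a surjective unital ring homomorphism
 with kernel m'.\<close>
definition residue_map :: "('a::field \<Rightarrow> int) \<Rightarrow> ('a \<Rightarrow> 'k::field) \<Rightarrow> bool" where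
  "residue_map v res \<longleftrightarrow>
     (\<forall>x\<in>vring v. \<forall>y\<in>vring v. res (x + y) = res x + res y \<and> res (x * y) = res x * res y)
   \<and> res 1 = 1 \<and> (\<forall>x\<in>vring v. res x = 0 \<longleftrightarrow> x \<in> mpow v 1) \<and> res ` vring v = UNIV"

text \<open>Free S-module on K' x K': finitely supported functions with values in S.\<close>
type_synonym 'a fm = "'a \<times> 'a \<Rightarrow> 'a"

definition fm_ok :: "'a::field set \<Rightarrow> 'a fm \<Rightarrow> bool" where
  "fm_ok S f \<longleftrightarrow> finite {p. f p \<noteq> 0} \<and> (\<forall>p. f p \<in> S)"

definition delta :: "'a::field \<Rightarrow> 'a \<Rightarrow> 'a fm" where
  "delta a b = (\<lambda>p. if p = (a, b) then 1 else 0)"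

inductive_set relN :: "'a::field set \<Rightarrow> 'a fm set" for S where
  zero: "(\<lambda>_. 0) \<in> relN S"
| add1: "(\<lambda>p. delta (a + a') b p - delta a b p - delta a' b p) \<in> relN S"
| add2: "(\<lambda>p. delta a (b + b') p - delta a b p - delta a b' p) \<in> relN S"
| sc1: "c \<in> S \<Longrightarrow> (\<lambda>p. delta (c * a) b p - c * delta a b p) \<in> relN S"
| sc2: "c \<in> S \<Longrightarrow> (\<lambda>p. delta a (c * b) p - c * delta a b p) \<in> relN S"
| plus: "f \<in> relN S \<Longrightarrow> g \<in> relN S \<Longrightarrow> (\<lambda>p. f p + g p) \<in> relN S"
| smult: "c \<in> S \<Longrightarrow> f \<in> relN S \<Longrightarrow> (\<lambda>p. c * f p) \<in> relN S"

text \<open>Elements of K' \<otimes>_S K' are the equivalence classes.\<close>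
type_synonym 'a tens = "'a fm set"

definition cls :: "'a::field set \<Rightarrow> 'a fm \<Rightarrow> 'a tens" where
  "cls S f = {g. fm_ok S g \<and> (\<lambda>p. f p - g p) \<in> relN S}"

definition tcarrier :: "'a::field set \<Rightarrow> 'a tens set" where
  "tcarrier S = {cls S f | f. fm_ok S f}"

definition conv :: "'a::field fm \<Rightarrow> 'a fm \<Rightarrow> 'a fm" where
  "conv f g = (\<lambda>p. \<Sum>q \<in> {(q1, q2). f q1 \<noteq> 0 \<and> g q2 \<noteq> 0 \<and>
        (fst q1 * fst q2, snd q1 * snd q2) = p}. f (fst q) * g (snd q))"

definition tp :: "'a::field set \<Rightarrow> 'a \<Rightarrow> 'a \<Rightarrow> 'a tens" where
  "tp S a b = cls S (delta a b)"

definition tzero :: "'a::field set \<Rightarrow> 'a tens" where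
  "tzero S = cls S (\<lambda>_. 0)"

definition tone :: "'a::field set \<Rightarrow> 'a tens" where
  "tone S = tp S 1 1"

definition tadd :: "'a::field set \<Rightarrow> 'a tens \<Rightarrow> 'a tens \<Rightarrow> 'a tens" where
  "tadd S x y = {h. \<exists>f\<in>x. \<exists>g\<in>y. h \<in> cls S (\<lambda>p. f p + g p)}"

definition tneg :: "'a::field set \<Rightarrow> 'a tens \<Rightarrow> 'a tens" where
  "tneg S x = {h. \<exists>f\<in>x. h \<in> cls S (\<lambda>p. - f p)}"

definition tsub :: "'a::field set \<Rightarrow> 'a tens \<Rightarrow> 'a tens \<Rightarrow> 'a tens" where
  "tsub S x y = tadd S x (tneg S y)"

definition tmul :: "'a::field set \<Rightarrow> 'a tens \<Rightarrow> 'a tens \<Rightarrow> 'a tens" where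
  "tmul S x y = {h. \<exists>f\<in>x. \<exists>g\<in>y. h \<in> cls S (conv f g)}"

definition tswap :: "'a::field set \<Rightarrow> 'a tens \<Rightarrow> 'a tens" where
  "tswap S x = {h. \<exists>f\<in>x. h \<in> cls S (\<lambda>(a, b). f (b, a))}"

primrec tpow :: "'a::field set \<Rightarrow> 'a tens \<Rightarrow> nat \<Rightarrow> 'a tens" where
  "tpow S x 0 = tone S"
| "tpow S x (Suc n) = tmul S (tpow S x n) x"

definition tinv :: "'a::field set \<Rightarrow> 'a tens \<Rightarrow> 'a tens" where
  "tinv S x = (SOME y. y \<in> tcarrier S \<and> tmul S x y = tone S)"

definition tpowi :: "'a::field set \<Rightarrow> 'a tens \<Rightarrow> int \<Rightarrow> 'a tens" where
  "tpowi S x k = (if 0 \<le> k then tpow S x (nat k) else tpow S (tinv S x) (nat (- k)))"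

primrec tsum :: "'a::field set \<Rightarrow> (nat \<Rightarrow> 'a tens) \<Rightarrow> nat \<Rightarrow> 'a tens" where
  "tsum S y 0 = tzero S"
| "tsum S y (Suc n) = tadd S (tsum S y n) (y n)"

inductive_set ospan :: "'a::field set \<Rightarrow> ('a \<Rightarrow> int) \<Rightarrow> 'a tens set \<Rightarrow> 'a tens set"
  for S v G where
  zero: "tzero S \<in> ospan S v G"
| gen: "x \<in> G \<Longrightarrow> x \<in> ospan S v G"
| add: "x \<in> ospan S v G \<Longrightarrow> y \<in> ospan S v G \<Longrightarrow> tadd S x y \<in> ospan S v G"
| smult: "c \<in> S \<Longrightarrow> c \<in> vring v \<Longrightarrow> x \<in> ospan S v G \<Longrightarrow> tmul S (tp S c 1) x \<in> ospan S v G"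

definition otens :: "'a::field set \<Rightarrow> ('a \<Rightarrow> int) \<Rightarrow> 'a set \<Rightarrow> 'a set \<Rightarrow> 'a tens set" where
  "otens S v A B = ospan S v {tp S a b | a b. a \<in> A \<and> b \<in> B}"

definition Xfil :: "'a::field set \<Rightarrow> ('a \<Rightarrow> int) \<Rightarrow> int \<Rightarrow> 'a tens set" where
  "Xfil S v i = ospan S v (\<Union>j. {tp S a b | a b. a \<in> mpow v j \<and> b \<in> mpow v (i - j)})"

text \<open>Concrete rendering of an isomorphism r_X : X_0/X_1 \<rightarrow> R' = kbar[X]/(X^n - 1) of unital
 kbar-algebras sending the class of \<pi> \<otimes> \<pi>^{-1} to X: R' is represented by the reduced
 polynomials (degree < n), r is given as a map on X_0 which is additive, multiplicative modulo
 X^n - 1, unital, kbar-linear (the class of a \<otimes> 1, a \<in> O_{k'}, goes to the constant res a),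
 has kernel exactly X_1 and is onto R'.\<close>
definition is_rX :: "'a::field set \<Rightarrow> ('a \<Rightarrow> int) \<Rightarrow> ('a \<Rightarrow> 'k::field) \<Rightarrow> nat \<Rightarrow> 'a
    \<Rightarrow> ('a tens \<Rightarrow> 'k poly) \<Rightarrow> bool" where
  "is_rX S v res n \<pi> r \<longleftrightarrow>
     (let f = monom 1 n - 1 in
       (\<forall>\<alpha>\<in>Xfil S v 0. degree (r \<alpha>) < n)
     \<and> (\<forall>\<alpha>\<in>Xfil S v 0. \<forall>\<beta>\<in>Xfil S v 0. r (tadd S \<alpha> \<beta>) = r \<alpha> + r \<beta>)
     \<and> (\<forall>\<alpha>\<in>Xfil S v 0. \<forall>\<beta>\<in>Xfil S v 0. r (tmul S \<alpha> \<beta>) = (r \<alpha> * r \<beta>) mod f)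
     \<and> r (tone S) = 1 mod f
     \<and> (\<forall>a\<in>S \<inter> vring v. r (tp S a 1) = [:res a:] mod f)
     \<and> (\<forall>\<alpha>\<in>Xfil S v 0. r \<alpha> = 0 \<longleftrightarrow> \<alpha> \<in> Xfil S v 1)
     \<and> (\<forall>p. degree p < n \<longrightarrow> (\<exists>\<alpha>\<in>Xfil S v 0. r \<alpha> = p))
     \<and> r (tp S \<pi> (inverse \<pi>)) = [:0, 1:] mod f)"

end

theory Submission
  imports Defs
begin

definition fsupp :: "'a::field fm \<Rightarrow> ('a \<times> 'a) set" where "fsupp f = {p. f p \<noteq> 0}"
definition pm :: "'a::field \<times> 'a \<Rightarrow> 'a \<times> 'a \<Rightarrow> 'a \<times> 'a" where
  "pm q1 q2 = (fst q1 * fst q2, snd q1 * snd q2)"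

lemma sf0: "subfield S \<Longrightarrow> 0 \<in> S" and sf1: "subfield S \<Longrightarrow> 1 \<in> S"
  and sf_add: "subfield S \<Longrightarrow> x \<in> S \<Longrightarrow> y \<in> S \<Longrightarrow> x + y \<in> S"
  and sf_mult: "subfield S \<Longrightarrow> x \<in> S \<Longrightarrow> y \<in> S \<Longrightarrow> x * y \<in> S"
  and sf_neg: "subfield S \<Longrightarrow> x \<in> S \<Longrightarrow> - x \<in> S"
  and sf_inv: "subfield S \<Longrightarrow> x \<in> S \<Longrightarrow> inverse x \<in> S"
  by (auto simp: subfield_def)

lemma sf_diff: "subfield S \<Longrightarrow> x \<in> S \<Longrightarrow> y \<in> S \<Longrightarrow> x - y \<in> S"
  using sf_add[of S x "-y"] sf_neg[of S y] by simp

lemma sf_sum: "subfield S \<Longrightarrow> (\<And>i. i \<in> I \<Longrightarrow> f i \<in> S) \<Longrightarrow> sum f I \<in> S"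
  by (induction I rule: infinite_finite_induct) (auto simp: sf0 sf_add)

lemma sf_delta: "subfield S \<Longrightarrow> delta a b p \<in> S"
  by (auto simp: delta_def sf0 sf1)

lemma relN_sum:
  assumes "finite I" "\<And>i. i \<in> I \<Longrightarrow> c i \<in> S" "\<And>i. i \<in> I \<Longrightarrow> g i \<in> relN S"
  shows "(\<lambda>p. \<Sum>i\<in>I. c i * g i p) \<in> relN S"
  using assms
proof (induction I rule: finite_induct)
  case empty
  then show ?case using relN.zero by simp
next
  case (insert x F)
  have "(\<lambda>p. c x * g x p) \<in> relN S" using insert by (intro relN.smult) auto
  then have "(\<lambda>p. c x * g x p + (\<Sum>i\<in>F. c i * g i p)) \<in> relN S"
    using insert by (intro relN.plus[where f="\<lambda>p. c x * g x p" and g = "\<lambda>p. \<Sum>i\<in>F. c i * g i p", simplified]) auto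
  then show ?case using insert by simp
qed

lemma relN_neg: "subfield S \<Longrightarrow> f \<in> relN S \<Longrightarrow> (\<lambda>p. - f p) \<in> relN S"
  using relN.smult[of "-1" S f] by (simp add: sf_neg sf1)

lemma relN_diff: "subfield S \<Longrightarrow> f \<in> relN S \<Longrightarrow> g \<in> relN S \<Longrightarrow> (\<lambda>p. f p - g p) \<in> relN S"
  using relN.plus[OF _ relN_neg[of S g], of f] by simp

lemma relN_cong: "f \<in> relN S \<Longrightarrow> f = g \<Longrightarrow> g \<in> relN S" by simp

lemma fm_ok_iff: "fm_ok S f \<longleftrightarrow> finite (fsupp f) \<and> (\<forall>p. f p \<in> S)"
  by (simp add: fm_ok_def fsupp_def)

lemma relN_ok:
  assumes "subfield S" "f \<in> relN S" shows "fm_ok S f"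
  using assms(2)
proof (induction rule: relN.induct)
  case zero then show ?case by (simp add: fm_ok_def sf0[OF assms(1)])
next
  case (add1 a a' b)
  have "fsupp (\<lambda>p. delta (a + a') b p - delta a b p - delta a' b p) \<subseteq> {(a+a',b),(a,b),(a',b)}"
    by (auto simp: fsupp_def delta_def)
  then show ?case using assms(1) unfolding fm_ok_iff
    by (auto intro!: sf_diff sf_delta dest: finite_subset)
next
  case (add2 a b b')
  have "fsupp (\<lambda>p. delta a (b + b') p - delta a b p - delta a b' p) \<subseteq> {(a,b+b'),(a,b),(a,b')}"
    by (auto simp: fsupp_def delta_def)
  then show ?case using assms(1) unfolding fm_ok_iff
    by (auto intro!: sf_diff sf_delta dest: finite_subset)
next
  case (sc1 c a b)
  have "fsupp (\<lambda>p. delta (c * a) b p - c * delta a b p) \<subseteq> {(c*a,b),(a,b)}"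
    by (auto simp: fsupp_def delta_def)
  then show ?case using assms(1) sc1 unfolding fm_ok_iff
    by (auto intro!: sf_diff sf_delta sf_mult dest: finite_subset)
next
  case (sc2 c a b)
  have "fsupp (\<lambda>p. delta a (c * b) p - c * delta a b p) \<subseteq> {(a,c*b),(a,b)}"
    by (auto simp: fsupp_def delta_def)
  then show ?case using assms(1) sc2 unfolding fm_ok_iff
    by (auto intro!: sf_diff sf_delta sf_mult dest: finite_subset)
next
  case (plus f g)
  have "fsupp (\<lambda>p. f p + g p) \<subseteq> fsupp f \<union> fsupp g" by (auto simp: fsupp_def)
  then show ?case using assms(1) plus unfolding fm_ok_iff
    by (auto intro!: sf_add dest: finite_subset)
next
  case (smult c f)
  have "fsupp (\<lambda>p. c * f p) \<subseteq> fsupp f" by (auto simp: fsupp_def)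
  then show ?case using assms(1) smult unfolding fm_ok_iff
    by (auto intro!: sf_mult dest: finite_subset)
qed

lemma fm_ok_add: "subfield S \<Longrightarrow> fm_ok S f \<Longrightarrow> fm_ok S g \<Longrightarrow> fm_ok S (\<lambda>p. f p + g p)"
proof -
  assume a: "subfield S" "fm_ok S f" "fm_ok S g"
  have "fsupp (\<lambda>p. f p + g p) \<subseteq> fsupp f \<union> fsupp g" by (auto simp: fsupp_def)
  then show ?thesis using a unfolding fm_ok_iff by (auto intro!: sf_add dest: finite_subset)
qed

lemma fm_ok_sc: "subfield S \<Longrightarrow> c \<in> S \<Longrightarrow> fm_ok S f \<Longrightarrow> fm_ok S (\<lambda>p. c * f p)"
proof -
  assume a: "subfield S" "c \<in> S" "fm_ok S f"
  have "fsupp (\<lambda>p. c * f p) \<subseteq> fsupp f" by (auto simp: fsupp_def)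
  then show ?thesis using a unfolding fm_ok_iff by (auto intro!: sf_mult dest: finite_subset)
qed

lemma fm_ok_neg: "subfield S \<Longrightarrow> fm_ok S f \<Longrightarrow> fm_ok S (\<lambda>p. - f p)"
  using fm_ok_sc[of S "-1" f] by (simp add: sf_neg sf1)

lemma fm_ok_diff: "subfield S \<Longrightarrow> fm_ok S f \<Longrightarrow> fm_ok S g \<Longrightarrow> fm_ok S (\<lambda>p. f p - g p)"
  using fm_ok_add[OF _ _ fm_ok_neg, of S f g] by simp

lemma fm_ok_zero: "subfield S \<Longrightarrow> fm_ok S (\<lambda>_. 0)"
  by (simp add: fm_ok_def sf0)

lemma fm_ok_delta: "subfield S \<Longrightarrow> fm_ok S (delta a b)"
proof -
  assume a: "subfield S"
  have "fsupp (delta a b) \<subseteq> {(a,b)}" by (auto simp: fsupp_def delta_def)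
  then show ?thesis using a unfolding fm_ok_iff by (auto intro!: sf_delta dest: finite_subset)
qed

lemma fm_ok_swap: "fm_ok S f \<Longrightarrow> fm_ok S (\<lambda>(a, b). f (b, a))"
proof -
  assume a: "fm_ok S f"
  have "fsupp (\<lambda>(a, b). f (b, a)) = prod.swap ` fsupp f" by (auto simp: fsupp_def image_iff)
  then show ?thesis using a unfolding fm_ok_iff by auto
qed

lemma conv_eq:
  assumes "finite A" "finite B" "fsupp f \<subseteq> A" "fsupp g \<subseteq> B"
  shows "conv f g p = (\<Sum>q1\<in>A. \<Sum>q2\<in>B. if pm q1 q2 = p then f q1 * g q2 else 0)"
proof -
  let ?Q = "{(q1, q2). f q1 \<noteq> 0 \<and> g q2 \<noteq> 0 \<and> (fst q1 * fst q2, snd q1 * snd q2) = p}"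
  have Q: "?Q \<subseteq> A \<times> B" using assms(3,4) by (auto simp: fsupp_def)
  have "(\<Sum>q1\<in>A. \<Sum>q2\<in>B. if pm q1 q2 = p then f q1 * g q2 else 0)
      = (\<Sum>q\<in>A\<times>B. if pm (fst q) (snd q) = p then f (fst q) * g (snd q) else 0)"
    by (simp add: sum.cartesian_product case_prod_beta)
  also have "\<dots> = (\<Sum>q\<in>?Q. f (fst q) * g (snd q))"
    by (rule sum.mono_neutral_cong_right) (use Q assms in \<open>auto simp: pm_def\<close>)
  finally show ?thesis by (simp add: conv_def)
qed

lemma conv_eq_ok:
  assumes "fm_ok S f" "fm_ok S g"
  shows "conv f g p = (\<Sum>q1\<in>fsupp f. \<Sum>q2\<in>fsupp g. if pm q1 q2 = p then f q1 * g q2 else 0)"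
  using assms by (intro conv_eq) (auto simp: fm_ok_iff)

lemma conv_comm:
  assumes "fm_ok S f" "fm_ok S g"
  shows "conv f g = conv g f"
proof
  fix p
  show "conv f g p = conv g f p"
    unfolding conv_eq_ok[OF assms] conv_eq_ok[OF assms(2,1)]
    by (subst sum.swap) (auto intro!: sum.cong simp: pm_def ac_simps)
qed

lemma conv_add_left:
  assumes "fm_ok S f" "fm_ok S f'" "fm_ok S g"
  shows "conv (\<lambda>p. f p + f' p) g = (\<lambda>p. conv f g p + conv f' g p)"
proof
  fix p
  let ?A = "fsupp f \<union> fsupp f'" and ?B = "fsupp g"
  have fin: "finite ?A" "finite ?B" using assms by (auto simp: fm_ok_iff)
  have s: "fsupp (\<lambda>p. f p + f' p) \<subseteq> ?A" "fsupp f \<subseteq> ?A" "fsupp f' \<subseteq> ?A" "fsupp g \<subseteq> ?B"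
    by (auto simp: fsupp_def)
  show "conv (\<lambda>p. f p + f' p) g p = conv f g p + conv f' g p"
    unfolding conv_eq[OF fin s(1) s(4)] conv_eq[OF fin s(2) s(4)] conv_eq[OF fin s(3) s(4)]
    by (auto simp: sum.distrib[symmetric] distrib_right intro!: sum.cong)
qed

lemma conv_sc_left:
  assumes "fm_ok S f" "fm_ok S g"
  shows "conv (\<lambda>p. c * f p) g = (\<lambda>p. c * conv f g p)"
proof
  fix p
  let ?A = "fsupp f" and ?B = "fsupp g"
  have fin: "finite ?A" "finite ?B" using assms by (auto simp: fm_ok_iff)
  have s: "fsupp (\<lambda>p. c * f p) \<subseteq> ?A" "fsupp f \<subseteq> ?A" "fsupp g \<subseteq> ?B"
    by (auto simp: fsupp_def)
  show "conv (\<lambda>p. c * f p) g p = c * conv f g p"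
    unfolding conv_eq[OF fin s(1) s(3)] conv_eq[OF fin s(2) s(3)]
    by (auto simp: sum_distrib_left intro!: sum.cong)
qed

lemma conv_delta_left:
  assumes "fm_ok S g"
  shows "conv (delta a b) g = (\<lambda>p. \<Sum>q\<in>fsupp g. g q * delta (a * fst q) (b * snd q) p)"
proof
  fix p
  have fin: "finite {(a,b)}" "finite (fsupp g)" using assms by (auto simp: fm_ok_iff)
  have s: "fsupp (delta a b) \<subseteq> {(a,b)}" "fsupp g \<subseteq> fsupp g" by (auto simp: fsupp_def delta_def)
  show "conv (delta a b) g p = (\<Sum>q\<in>fsupp g. g q * delta (a * fst q) (b * snd q) p)"
    unfolding conv_eq[OF fin s]
    by (auto intro!: sum.cong simp: pm_def delta_def)
qed

lemma fm_expand:
  assumes "finite B" "fsupp f \<subseteq> B"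
  shows "f = (\<lambda>p. \<Sum>q\<in>B. f q * delta (fst q) (snd q) p)"
proof
  fix p
  have "(\<Sum>q\<in>B. f q * delta (fst q) (snd q) p) = (\<Sum>q\<in>B. if q = p then f q else 0)"
    by (rule sum.cong) (auto simp: delta_def)
  also have "\<dots> = f p" using assms by (auto simp: fsupp_def)
  finally show "f p = (\<Sum>q\<in>B. f q * delta (fst q) (snd q) p)" by simp
qed

lemma conv_one: assumes "fm_ok S f" shows "conv (delta 1 1) f = f"
proof -
  have "conv (delta 1 1) f = (\<lambda>p. \<Sum>q\<in>fsupp f. f q * delta (fst q) (snd q) p)"
    using conv_delta_left[OF assms] by simp
  also have "\<dots> = f" by (rule fm_expand[symmetric]) (use assms in \<open>auto simp: fm_ok_iff\<close>)
  finally show ?thesis .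
qed

lemma conv_zero: "conv (\<lambda>_. 0) f = (\<lambda>_. 0)"
  by (simp add: conv_def)

lemma sum3_swap: "(\<Sum>z\<in>C. \<Sum>x\<in>A. \<Sum>y\<in>B. F x y z) = (\<Sum>x\<in>A. \<Sum>y\<in>B. \<Sum>z\<in>C. F x y z)"
  by (subst sum.swap) (rule sum.cong[OF refl], rule sum.swap)

lemma sum_collapse:
  assumes "finite R" "\<And>a b. a \<in> A \<Longrightarrow> b \<in> B \<Longrightarrow> \<phi> a b \<in> R"
  shows "(\<Sum>r\<in>R. \<Sum>a\<in>A. \<Sum>b\<in>B. if \<phi> a b = r then G a b r else 0) = (\<Sum>a\<in>A. \<Sum>b\<in>B. G a b (\<phi> a b))"
proof -
  have "(\<Sum>r\<in>R. \<Sum>a\<in>A. \<Sum>b\<in>B. if \<phi> a b = r then G a b r else 0)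
      = (\<Sum>a\<in>A. \<Sum>b\<in>B. \<Sum>r\<in>R. if \<phi> a b = r then G a b r else 0)" by (rule sum3_swap)
  also have "\<dots> = (\<Sum>a\<in>A. \<Sum>b\<in>B. G a b (\<phi> a b))"
    using assms by (auto intro!: sum.cong simp: sum.delta)
  finally show ?thesis .
qed

lemma conv_supp:
  assumes "fm_ok S f" "fm_ok S g"
  shows "fsupp (conv f g) \<subseteq> (\<lambda>(a, b). pm a b) ` (fsupp f \<times> fsupp g)"
proof
  fix p assume "p \<in> fsupp (conv f g)"
  then have "conv f g p \<noteq> 0" by (simp add: fsupp_def)
  then have "(\<Sum>q1\<in>fsupp f. \<Sum>q2\<in>fsupp g. if pm q1 q2 = p then f q1 * g q2 else 0) \<noteq> 0"
    unfolding conv_eq_ok[OF assms] .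
  then obtain q1 where q1: "q1 \<in> fsupp f" "(\<Sum>q2\<in>fsupp g. if pm q1 q2 = p then f q1 * g q2 else 0) \<noteq> 0"
    by (rule sum.not_neutral_contains_not_neutral)
  from q1(2) obtain q2 where q2: "q2 \<in> fsupp g" "(if pm q1 q2 = p then f q1 * g q2 else 0) \<noteq> 0"
    by (rule sum.not_neutral_contains_not_neutral)
  from q2(2) have "pm q1 q2 = p" by (cases "pm q1 q2 = p") simp_all
  then show "p \<in> (\<lambda>(a, b). pm a b) ` (fsupp f \<times> fsupp g)" using q1(1) q2(1)
    by (intro image_eqI[of _ _ "(q1,q2)"]) auto
qed

lemma fm_ok_conv:
  assumes "subfield S" "fm_ok S f" "fm_ok S g"
  shows "fm_ok S (conv f g)"
proof -
  have "finite (fsupp (conv f g))"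
    using conv_supp[OF assms(2,3)] assms by (auto simp: fm_ok_iff dest: finite_subset)
  moreover have "conv f g p \<in> S" for p
  proof -
    have fS: "\<And>q. f q \<in> S" "\<And>q. g q \<in> S" using assms by (auto simp: fm_ok_def)
    show ?thesis unfolding conv_eq_ok[OF assms(2,3)]
      by (intro sf_sum[OF assms(1)]) (simp add: sf0[OF assms(1)] sf_mult[OF assms(1)] fS)
  qed
  ultimately show ?thesis by (simp add: fm_ok_iff)
qed

lemma pm_assoc: "pm (pm a b) c = pm a (pm b c)" by (simp add: pm_def ac_simps)

lemma conv_assoc:
  assumes f: "fm_ok S f" and g: "fm_ok S g" and h: "fm_ok S h"
  shows "conv (conv f g) h = conv f (conv g h)"
proof
  fix p
  define A where "A = fsupp f"
  define B where "B = fsupp g"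
  define C where "C = fsupp h"
  have fin: "finite A" "finite B" "finite C" using assms by (auto simp: A_def B_def C_def fm_ok_iff)
  define R where "R = (\<lambda>(a, b). pm a b) ` (A \<times> B)"
  define R' where "R' = (\<lambda>(a, b). pm a b) ` (B \<times> C)"
  have finR: "finite R" "finite R'" using fin by (auto simp: R_def R'_def)
  have sR: "fsupp (conv f g) \<subseteq> R" "fsupp (conv g h) \<subseteq> R'"
    using conv_supp[OF f g] conv_supp[OF g h] by (auto simp: R_def R'_def A_def B_def C_def)
  have "conv (conv f g) h p = (\<Sum>r\<in>R. \<Sum>q3\<in>C. if pm r q3 = p then conv f g r * h q3 else 0)"
    by (rule conv_eq) (use finR fin sR in \<open>auto simp: C_def\<close>)
  also have "\<dots> = (\<Sum>r\<in>R. \<Sum>q1\<in>A. \<Sum>q2\<in>B. if pm q1 q2 = r then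
        (\<Sum>q3\<in>C. if pm r q3 = p then f q1 * g q2 * h q3 else 0) else 0)"
  proof (rule sum.cong[OF refl])
    fix r
    have "(\<Sum>q3\<in>C. if pm r q3 = p then conv f g r * h q3 else 0)
        = (\<Sum>q3\<in>C. \<Sum>q1\<in>A. \<Sum>q2\<in>B. if pm q1 q2 = r then
            (if pm r q3 = p then f q1 * g q2 * h q3 else 0) else 0)"
      unfolding conv_eq_ok[OF f g, folded A_def B_def]
    proof (rule sum.cong[OF refl])
      fix q3
      show "(if pm r q3 = p then (\<Sum>q1\<in>A. \<Sum>q2\<in>B. if pm q1 q2 = r then f q1 * g q2 else 0) * h q3 else 0)
        = (\<Sum>q1\<in>A. \<Sum>q2\<in>B. if pm q1 q2 = r then (if pm r q3 = p then f q1 * g q2 * h q3 else 0) else 0)"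
      proof (cases "pm r q3 = p")
        case True then show ?thesis by (auto simp: sum_distrib_right intro!: sum.cong)
      next
        case False then show ?thesis by (simp only: if_not_P[OF False] if_False if_cancel sum.neutral_const)
      qed
    qed
    also have "\<dots> = (\<Sum>q1\<in>A. \<Sum>q2\<in>B. \<Sum>q3\<in>C. if pm q1 q2 = r then
            (if pm r q3 = p then f q1 * g q2 * h q3 else 0) else 0)" by (rule sum3_swap)
    also have "\<dots> = (\<Sum>q1\<in>A. \<Sum>q2\<in>B. if pm q1 q2 = r then
        (\<Sum>q3\<in>C. if pm r q3 = p then f q1 * g q2 * h q3 else 0) else 0)"
      by (auto intro!: sum.cong)
    finally show "(\<Sum>q3\<in>C. if pm r q3 = p then conv f g r * h q3 else 0) = \<dots>" .
  qed
  also have "\<dots> = (\<Sum>q1\<in>A. \<Sum>q2\<in>B. \<Sum>q3\<in>C. if pm (pm q1 q2) q3 = p then f q1 * g q2 * h q3 else 0)"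
    by (rule sum_collapse) (use finR in \<open>auto simp: R_def\<close>)
  also have "\<dots> = (\<Sum>q1\<in>A. \<Sum>s\<in>R'. \<Sum>q2\<in>B. \<Sum>q3\<in>C. if pm q2 q3 = s then
        (if pm q1 s = p then f q1 * g q2 * h q3 else 0) else 0)"
  proof (rule sum.cong[OF refl])
    fix q1
    show "(\<Sum>q2\<in>B. \<Sum>q3\<in>C. if pm (pm q1 q2) q3 = p then f q1 * g q2 * h q3 else 0) = (\<Sum>s\<in>R'. \<Sum>q2\<in>B. \<Sum>q3\<in>C. if pm q2 q3 = s then
        (if pm q1 s = p then f q1 * g q2 * h q3 else 0) else 0)"
    proof -
      have mem: "\<And>b c. b \<in> B \<Longrightarrow> c \<in> C \<Longrightarrow> pm b c \<in> R'"
        unfolding R'_def by (rule_tac x="(b,c)" in image_eqI) auto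
      show ?thesis
        using sum_collapse[OF finR(2) mem, where G="\<lambda>q2 q3 s. if pm q1 s = p then f q1 * g q2 * h q3 else 0"]
        by (simp add: pm_assoc)
    qed
  qed
  also have "\<dots> = (\<Sum>q1\<in>A. \<Sum>s\<in>R'. if pm q1 s = p then f q1 * conv g h s else 0)"
    unfolding conv_eq_ok[OF g h, folded B_def C_def]
  proof (intro sum.cong[OF refl])
    fix q1 s
    show "(\<Sum>q2\<in>B. \<Sum>q3\<in>C. if pm q2 q3 = s then (if pm q1 s = p then f q1 * g q2 * h q3 else 0) else 0)
      = (if pm q1 s = p then f q1 * (\<Sum>q2\<in>B. \<Sum>q3\<in>C. if pm q2 q3 = s then g q2 * h q3 else 0) else 0)"
    proof (cases "pm q1 s = p")
      case True then show ?thesis by (auto simp: sum_distrib_left ac_simps intro!: sum.cong)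
    next
      case False then show ?thesis by (simp only: if_not_P[OF False] if_False if_cancel sum.neutral_const)
    qed
  qed
  also have "\<dots> = conv f (conv g h) p"
    by (rule conv_eq[symmetric]) (use finR fin sR in \<open>auto simp: A_def\<close>)
  finally show "conv (conv f g) h p = conv f (conv g h) p" .
qed

lemma fin_fsupp_delta[simp]: "finite (fsupp (delta a b))"
proof -
  have "fsupp (delta a b) \<subseteq> {(a,b)}" by (auto simp: fsupp_def delta_def)
  then show ?thesis by (rule finite_subset) simp
qed

lemma fin_fsupp_add[simp]: "finite (fsupp f) \<Longrightarrow> finite (fsupp g) \<Longrightarrow> finite (fsupp (\<lambda>p. f p + g p))"
  by (rule finite_subset[of _ "fsupp f \<union> fsupp g"]) (auto simp: fsupp_def)
lemma fin_fsupp_diff[simp]: "finite (fsupp f) \<Longrightarrow> finite (fsupp g) \<Longrightarrow> finite (fsupp (\<lambda>p. f p - g p))"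
  by (rule finite_subset[of _ "fsupp f \<union> fsupp g"]) (auto simp: fsupp_def)
lemma fin_fsupp_sc[simp]: "finite (fsupp f) \<Longrightarrow> finite (fsupp (\<lambda>p. c * f p))"
  by (rule finite_subset[of _ "fsupp f"]) (auto simp: fsupp_def)

lemma fin_fsupp_neg[simp]: "finite (fsupp f) \<Longrightarrow> finite (fsupp (\<lambda>p. - f p))"
  by (simp add: fsupp_def)

lemma conv_add_left':
  assumes "finite (fsupp f)" "finite (fsupp f')" "finite (fsupp g)"
  shows "conv (\<lambda>p. f p + f' p) g = (\<lambda>p. conv f g p + conv f' g p)"
proof
  fix p
  let ?A = "fsupp f \<union> fsupp f'" and ?B = "fsupp g"
  have fin: "finite ?A" "finite ?B" using assms by auto
  have s: "fsupp (\<lambda>p. f p + f' p) \<subseteq> ?A" "fsupp f \<subseteq> ?A" "fsupp f' \<subseteq> ?A" "fsupp g \<subseteq> ?B"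
    by (auto simp: fsupp_def)
  show "conv (\<lambda>p. f p + f' p) g p = conv f g p + conv f' g p"
    unfolding conv_eq[OF fin s(1) s(4)] conv_eq[OF fin s(2) s(4)] conv_eq[OF fin s(3) s(4)]
    by (auto simp: sum.distrib[symmetric] distrib_right intro!: sum.cong)
qed

lemma conv_sc_left':
  assumes "finite (fsupp f)" "finite (fsupp g)"
  shows "conv (\<lambda>p. c * f p) g = (\<lambda>p. c * conv f g p)"
proof
  fix p
  let ?A = "fsupp f" and ?B = "fsupp g"
  have fin: "finite ?A" "finite ?B" using assms by auto
  have s: "fsupp (\<lambda>p. c * f p) \<subseteq> ?A" "fsupp f \<subseteq> ?A" "fsupp g \<subseteq> ?B"
    by (auto simp: fsupp_def)
  show "conv (\<lambda>p. c * f p) g p = c * conv f g p"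
    unfolding conv_eq[OF fin s(1) s(3)] conv_eq[OF fin s(2) s(3)]
    by (auto simp: sum_distrib_left intro!: sum.cong)
qed

lemma conv_diff_left':
  assumes "finite (fsupp f)" "finite (fsupp f')" "finite (fsupp g)"
  shows "conv (\<lambda>p. f p - f' p) g = (\<lambda>p. conv f g p - conv f' g p)"
  using conv_add_left'[of f "\<lambda>p. (-1) * f' p" g] conv_sc_left'[of f' g "-1"] assms by simp

lemma conv_delta_left':
  assumes "finite (fsupp g)"
  shows "conv (delta a b) g = (\<lambda>p. \<Sum>q\<in>fsupp g. g q * delta (a * fst q) (b * snd q) p)"
proof
  fix p
  have fin: "finite {(a,b)}" "finite (fsupp g)" using assms by auto
  have s: "fsupp (delta a b) \<subseteq> {(a,b)}" "fsupp g \<subseteq> fsupp g" by (auto simp: fsupp_def delta_def)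
  show "conv (delta a b) g p = (\<Sum>q\<in>fsupp g. g q * delta (a * fst q) (b * snd q) p)"
    unfolding conv_eq[OF fin s]
    by (auto intro!: sum.cong simp: pm_def delta_def)
qed

lemma relN_fin: "subfield S \<Longrightarrow> f \<in> relN S \<Longrightarrow> finite (fsupp f)"
  using relN_ok[of S f] by (simp add: fm_ok_iff)

lemma conv_relN_left:
  assumes S: "subfield S" and r: "r \<in> relN S" and g: "fm_ok S g"
  shows "conv r g \<in> relN S"
  using r
proof (induction rule: relN.induct)
  case zero then show ?case by (simp add: conv_zero relN.zero)
next
  case (add1 a a' b)
  have fg: "finite (fsupp g)" "\<And>q. g q \<in> S" using g by (auto simp: fm_ok_iff)
  have "conv (\<lambda>p. delta (a + a') b p - delta a b p - delta a' b p) g = (\<lambda>p. \<Sum>q\<in>fsupp g. g q *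
     (delta ((a + a') * fst q) (b * snd q) p - delta (a * fst q) (b * snd q) p - delta (a' * fst q) (b * snd q) p))"
    by (simp add: conv_diff_left' conv_delta_left' fg) (simp add: right_diff_distrib sum_subtractf)
  moreover have "(\<lambda>p. delta ((a + a') * fst q) (b * snd q) p - delta (a * fst q) (b * snd q) p - delta (a' * fst q) (b * snd q) p) \<in> relN S" for q
    using relN.add1[of "a * fst q" "a' * fst q" "b * snd q" S] by (simp add: distrib_right)
  ultimately show ?case using fg by (auto intro!: relN_sum)
next
  case (add2 a b b')
  have fg: "finite (fsupp g)" "\<And>q. g q \<in> S" using g by (auto simp: fm_ok_iff)
  have "conv (\<lambda>p. delta a (b + b') p - delta a b p - delta a b' p) g = (\<lambda>p. \<Sum>q\<in>fsupp g. g q *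
     (delta (a * fst q) ((b + b') * snd q) p - delta (a * fst q) (b * snd q) p - delta (a * fst q) (b' * snd q) p))"
    by (simp add: conv_diff_left' conv_delta_left' fg) (simp add: right_diff_distrib sum_subtractf)
  moreover have "(\<lambda>p. delta (a * fst q) ((b + b') * snd q) p - delta (a * fst q) (b * snd q) p - delta (a * fst q) (b' * snd q) p) \<in> relN S" for q
    using relN.add2[of "a * fst q" "b * snd q" "b' * snd q" S] by (simp add: distrib_right)
  ultimately show ?case using fg by (auto intro!: relN_sum)
next
  case (sc1 c a b)
  have fg: "finite (fsupp g)" "\<And>q. g q \<in> S" using g by (auto simp: fm_ok_iff)
  have "conv (\<lambda>p. delta (c * a) b p - c * delta a b p) g = (\<lambda>p. \<Sum>q\<in>fsupp g. g q *
     (delta (c * (a * fst q)) (b * snd q) p - c * delta (a * fst q) (b * snd q) p))"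
    by (simp add: conv_diff_left' conv_sc_left' conv_delta_left' fg) (simp add: sum_distrib_left right_diff_distrib sum_subtractf mult.assoc mult.left_commute)
  moreover have "(\<lambda>p. delta (c * (a * fst q)) (b * snd q) p - c * delta (a * fst q) (b * snd q) p) \<in> relN S" for q
    using relN.sc1[of c S "a * fst q" "b * snd q"] sc1 by simp
  ultimately show ?case using fg by (auto intro!: relN_sum)
next
  case (sc2 c a b)
  have fg: "finite (fsupp g)" "\<And>q. g q \<in> S" using g by (auto simp: fm_ok_iff)
  have "conv (\<lambda>p. delta a (c * b) p - c * delta a b p) g = (\<lambda>p. \<Sum>q\<in>fsupp g. g q *
     (delta (a * fst q) (c * (b * snd q)) p - c * delta (a * fst q) (b * snd q) p))"
    by (simp add: conv_diff_left' conv_sc_left' conv_delta_left' fg) (simp add: sum_distrib_left right_diff_distrib sum_subtractf mult.assoc mult.left_commute)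
  moreover have "(\<lambda>p. delta (a * fst q) (c * (b * snd q)) p - c * delta (a * fst q) (b * snd q) p) \<in> relN S" for q
    using relN.sc2[of c S "a * fst q" "b * snd q"] sc2 by simp
  ultimately show ?case using fg by (auto intro!: relN_sum)
next
  case (plus f f')
  have "conv (\<lambda>p. f p + f' p) g = (\<lambda>p. conv f g p + conv f' g p)"
    using plus relN_fin[OF S] g by (intro conv_add_left') (auto simp: fm_ok_iff)
  then show ?case using plus relN.plus by simp
next
  case (smult c f)
  have "conv (\<lambda>p. c * f p) g = (\<lambda>p. c * conv f g p)"
    using smult relN_fin[OF S] g by (intro conv_sc_left') (auto simp: fm_ok_iff)
  then show ?case using smult relN.smult by simp
qed

lemma delta_swap: "(\<lambda>(x, y). delta a b (y, x)) = delta b a"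
  by (auto simp: delta_def fun_eq_iff)
lemma delta_swap': "delta a b (snd p, fst p) = delta b a p"
  by (auto simp: delta_def)

lemma relN_swap:
  assumes S: "subfield S" and r: "r \<in> relN S"
  shows "(\<lambda>(x, y). r (y, x)) \<in> relN S"
  using r
proof (induction rule: relN.induct)
  case zero then show ?case by (simp add: relN.zero)
next
  case (add1 a a' b)
  then show ?case using relN.add2[of b a a' S] by (simp add: delta_swap' case_prod_unfold)
next
  case (add2 a b b')
  then show ?case using relN.add1[of b b' a S] by (simp add: delta_swap' case_prod_unfold)
next
  case (sc1 c a b)
  then show ?case using relN.sc2[of c S b a] by (simp add: delta_swap' case_prod_unfold)
next
  case (sc2 c a b)
  then show ?case using relN.sc1[of c S b a] by (simp add: delta_swap' case_prod_unfold)
next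
  case (plus f g)
  then show ?case using relN.plus[of "\<lambda>(x, y). f (y, x)" S "\<lambda>(x, y). g (y, x)"] by (simp add: case_prod_unfold)
next
  case (smult c f)
  then show ?case using relN.smult[of c S "\<lambda>(x, y). f (y, x)"] by (simp add: case_prod_unfold)
qed

lemma conv_delta_delta: "conv (delta a b) (delta c d) = delta (a * c) (b * d)"
proof -
  have "fsupp (delta c d) = {(c, d)}" by (auto simp: fsupp_def delta_def)
  then show ?thesis by (simp add: conv_delta_left') (simp add: delta_def)
qed

lemma swap_conv:
  assumes "fm_ok S f" "fm_ok S g"
  shows "(\<lambda>(x, y). conv f g (y, x)) = conv (\<lambda>(x, y). f (y, x)) (\<lambda>(x, y). g (y, x))"
proof
  fix p
  let ?sw = "\<lambda>(x::'a, y::'a). (y, x)"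
  have fin: "finite (fsupp f)" "finite (fsupp g)" using assms by (auto simp: fm_ok_iff)
  have s: "fsupp (\<lambda>(x, y). f (y, x)) \<subseteq> ?sw ` fsupp f" "fsupp (\<lambda>(x, y). g (y, x)) \<subseteq> ?sw ` fsupp g"
    by (auto simp: fsupp_def image_iff)
  have inj: "inj_on ?sw A" for A by (auto simp: inj_on_def)
  have "conv (\<lambda>(x, y). f (y, x)) (\<lambda>(x, y). g (y, x)) p
      = (\<Sum>q1\<in>?sw ` fsupp f. \<Sum>q2\<in>?sw ` fsupp g. if pm q1 q2 = p then (case q1 of (x, y) \<Rightarrow> f (y, x)) * (case q2 of (x, y) \<Rightarrow> g (y, x)) else 0)"
    by (rule conv_eq) (use fin s in auto)
  also have "\<dots> = (\<Sum>q1\<in>fsupp f. \<Sum>q2\<in>fsupp g. if pm (?sw q1) (?sw q2) = p then f q1 * g q2 else 0)"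
    by (simp only: sum.reindex[OF inj] o_def) (auto intro!: sum.cong split: prod.split)
  also have "\<dots> = (\<Sum>q1\<in>fsupp f. \<Sum>q2\<in>fsupp g. if pm q1 q2 = ?sw p then f q1 * g q2 else 0)"
    by (intro sum.cong refl) (auto simp: pm_def case_prod_unfold)
  also have "\<dots> = conv f g (?sw p)" by (rule conv_eq_ok[OF assms, symmetric])
  finally show "(case p of (x, y) \<Rightarrow> conv f g (y, x)) = conv (\<lambda>(x, y). f (y, x)) (\<lambda>(x, y). g (y, x)) p"
    by (simp add: case_prod_unfold)
qed

locale tens_loc = fixes S :: "'a::field set" assumes S: "subfield S"
begin

lemma cls_self: "fm_ok S f \<Longrightarrow> f \<in> cls S f"
  by (simp add: cls_def relN.zero)

lemma cls_cong:
  assumes "(\<lambda>p. f p - g p) \<in> relN S"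
  shows "cls S f = cls S g"
proof -
  have "(\<lambda>p. f p - h p) \<in> relN S \<longleftrightarrow> (\<lambda>p. g p - h p) \<in> relN S" for h
  proof
    assume "(\<lambda>p. f p - h p) \<in> relN S"
    from relN_diff[OF S this assms] show "(\<lambda>p. g p - h p) \<in> relN S" by simp
  next
    assume "(\<lambda>p. g p - h p) \<in> relN S"
    from relN.plus[OF assms this] show "(\<lambda>p. f p - h p) \<in> relN S" by simp
  qed
  then show ?thesis by (simp add: cls_def)
qed

lemma cls_eq_iff:
  assumes "fm_ok S f"
  shows "cls S f = cls S g \<longleftrightarrow> (\<lambda>p. f p - g p) \<in> relN S"
proof
  assume "cls S f = cls S g"
  then have "f \<in> cls S g" using cls_self[OF assms] by simp
  then have "(\<lambda>p. g p - f p) \<in> relN S" by (simp add: cls_def)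
  from relN_neg[OF S this] show "(\<lambda>p. f p - g p) \<in> relN S" by simp
qed (rule cls_cong)

lemma cls_in: "fm_ok S f \<Longrightarrow> cls S f \<in> tcarrier S"
  by (auto simp: tcarrier_def)

lemma tcarrierE:
  assumes "x \<in> tcarrier S"
  obtains f where "fm_ok S f" "x = cls S f"
  using assms by (auto simp: tcarrier_def)

lemma tadd_cls:
  assumes f: "fm_ok S f" and g: "fm_ok S g"
  shows "tadd S (cls S f) (cls S g) = cls S (\<lambda>p. f p + g p)"
proof -
  have c: "cls S (\<lambda>p. f' p + g' p) = cls S (\<lambda>p. f p + g p)" if "f' \<in> cls S f" "g' \<in> cls S g" for f' g'
  proof (rule cls_cong)
    have "(\<lambda>p. f p - f' p) \<in> relN S" "(\<lambda>p. g p - g' p) \<in> relN S" using that by (auto simp: cls_def)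
    from relN_neg[OF S relN.plus[OF this]]
    show "(\<lambda>p. f' p + g' p - (f p + g p)) \<in> relN S" by (simp add: algebra_simps)
  qed
  show ?thesis unfolding tadd_def using c cls_self[OF f] cls_self[OF g] by blast
qed

lemma tneg_cls:
  assumes f: "fm_ok S f"
  shows "tneg S (cls S f) = cls S (\<lambda>p. - f p)"
proof -
  have c: "cls S (\<lambda>p. - f' p) = cls S (\<lambda>p. - f p)" if "f' \<in> cls S f" for f'
  proof (rule cls_cong)
    have "(\<lambda>p. f p - f' p) \<in> relN S" using that by (auto simp: cls_def)
    then show "(\<lambda>p. - f' p - - f p) \<in> relN S" by simp
  qed
  show ?thesis unfolding tneg_def using c cls_self[OF f] by blast
qed

lemma tmul_cls:
  assumes f: "fm_ok S f" and g: "fm_ok S g"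
  shows "tmul S (cls S f) (cls S g) = cls S (conv f g)"
proof -
  have c: "cls S (conv f' g') = cls S (conv f g)" if "f' \<in> cls S f" "g' \<in> cls S g" for f' g'
  proof (rule cls_cong)
    have r: "(\<lambda>p. f p - f' p) \<in> relN S" "(\<lambda>p. g p - g' p) \<in> relN S" using that by (auto simp: cls_def)
    have ok: "fm_ok S f'" "fm_ok S g'" using that by (auto simp: cls_def)
    have fin: "finite (fsupp f)" "finite (fsupp g)" "finite (fsupp f')" "finite (fsupp g')"
      using ok f g by (auto simp: fm_ok_iff)
    have 1: "conv (\<lambda>p. f p - f' p) g' \<in> relN S" by (rule conv_relN_left[OF S r(1) ok(2)])
    have 2: "conv (\<lambda>p. g p - g' p) f \<in> relN S" by (rule conv_relN_left[OF S r(2) f])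
    have e1: "conv (\<lambda>p. f p - f' p) g' = (\<lambda>p. conv f g' p - conv f' g' p)"
      by (rule conv_diff_left') (use fin in auto)
    have e2: "conv (\<lambda>p. g p - g' p) f = (\<lambda>p. conv f g p - conv f g' p)"
      using conv_diff_left'[of g g' f] fin conv_comm[OF f g] conv_comm[OF f ok(2)] by simp
    from relN.plus[OF 1 2] have "(\<lambda>p. conv f g p - conv f' g' p) \<in> relN S"
      unfolding e1 e2 by (simp add: algebra_simps)
    from relN_neg[OF S this] show "(\<lambda>p. conv f' g' p - conv f g p) \<in> relN S" by simp
  qed
  show ?thesis unfolding tmul_def using c cls_self[OF f] cls_self[OF g] by blast
qed

lemma tswap_cls:
  assumes f: "fm_ok S f"
  shows "tswap S (cls S f) = cls S (\<lambda>(a, b). f (b, a))"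
proof -
  have c: "cls S (\<lambda>(a, b). f' (b, a)) = cls S (\<lambda>(a, b). f (b, a))" if "f' \<in> cls S f" for f'
  proof (rule cls_cong)
    have "(\<lambda>p. f p - f' p) \<in> relN S" using that by (auto simp: cls_def)
    from relN_neg[OF S relN_swap[OF S this]]
    show "(\<lambda>p. (case p of (a, b) \<Rightarrow> f' (b, a)) - (case p of (a, b) \<Rightarrow> f (b, a))) \<in> relN S"
      by (simp add: case_prod_unfold)
  qed
  show ?thesis unfolding tswap_def using c cls_self[OF f] by blast
qed

lemma ok_delta: "fm_ok S (delta a b)" by (rule fm_ok_delta[OF S])

lemma tp_in: "tp S a b \<in> tcarrier S" by (simp add: tp_def cls_in ok_delta)
lemma tzero_in: "tzero S \<in> tcarrier S" by (simp add: tzero_def cls_in fm_ok_zero[OF S])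
lemma tone_in: "tone S \<in> tcarrier S" by (simp add: tone_def tp_in)

lemma tadd_in: "x \<in> tcarrier S \<Longrightarrow> y \<in> tcarrier S \<Longrightarrow> tadd S x y \<in> tcarrier S"
  by (auto elim!: tcarrierE simp: tadd_cls cls_in fm_ok_add[OF S])
lemma tneg_in: "x \<in> tcarrier S \<Longrightarrow> tneg S x \<in> tcarrier S"
  by (auto elim!: tcarrierE simp: tneg_cls cls_in fm_ok_neg[OF S])
lemma tsub_in: "x \<in> tcarrier S \<Longrightarrow> y \<in> tcarrier S \<Longrightarrow> tsub S x y \<in> tcarrier S"
  by (simp add: tsub_def tadd_in tneg_in)
lemma tmul_in: "x \<in> tcarrier S \<Longrightarrow> y \<in> tcarrier S \<Longrightarrow> tmul S x y \<in> tcarrier S"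
  by (auto elim!: tcarrierE simp: tmul_cls cls_in fm_ok_conv[OF S])
lemma tswap_in: "x \<in> tcarrier S \<Longrightarrow> tswap S x \<in> tcarrier S"
  by (auto elim!: tcarrierE simp: tswap_cls cls_in fm_ok_swap)

lemma tadd_comm: "x \<in> tcarrier S \<Longrightarrow> y \<in> tcarrier S \<Longrightarrow> tadd S x y = tadd S y x"
  by (auto elim!: tcarrierE simp: tadd_cls add.commute)
lemma tadd_assoc: "x \<in> tcarrier S \<Longrightarrow> y \<in> tcarrier S \<Longrightarrow> z \<in> tcarrier S \<Longrightarrow>
    tadd S (tadd S x y) z = tadd S x (tadd S y z)"
  by (auto elim!: tcarrierE simp: tadd_cls fm_ok_add[OF S] add.assoc)
lemma tadd_zero: "x \<in> tcarrier S \<Longrightarrow> tadd S x (tzero S) = x"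
  by (auto elim!: tcarrierE simp: tzero_def tadd_cls fm_ok_zero[OF S])
lemma tzero_add: "x \<in> tcarrier S \<Longrightarrow> tadd S (tzero S) x = x"
  by (auto elim!: tcarrierE simp: tzero_def tadd_cls fm_ok_zero[OF S])
lemma tadd_neg: "x \<in> tcarrier S \<Longrightarrow> tadd S x (tneg S x) = tzero S"
  by (auto elim!: tcarrierE simp: tzero_def tadd_cls tneg_cls fm_ok_neg[OF S])
lemma tsub_self: "x \<in> tcarrier S \<Longrightarrow> tsub S x x = tzero S"
  by (simp add: tsub_def tadd_neg)

lemma tmul_comm: "x \<in> tcarrier S \<Longrightarrow> y \<in> tcarrier S \<Longrightarrow> tmul S x y = tmul S y x"
  by (auto elim!: tcarrierE simp: tmul_cls conv_comm)
lemma tmul_assoc: "x \<in> tcarrier S \<Longrightarrow> y \<in> tcarrier S \<Longrightarrow> z \<in> tcarrier S \<Longrightarrow>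
    tmul S (tmul S x y) z = tmul S x (tmul S y z)"
  by (auto elim!: tcarrierE simp: tmul_cls fm_ok_conv[OF S] conv_assoc)
lemma tone_mul: "x \<in> tcarrier S \<Longrightarrow> tmul S (tone S) x = x"
  by (auto elim!: tcarrierE simp: tone_def tp_def tmul_cls ok_delta conv_one)
lemma tmul_one: "x \<in> tcarrier S \<Longrightarrow> tmul S x (tone S) = x"
  using tmul_comm[OF _ tone_in] tone_mul by simp
lemma tzero_mul: "x \<in> tcarrier S \<Longrightarrow> tmul S (tzero S) x = tzero S"
  by (auto elim!: tcarrierE simp: tzero_def tmul_cls fm_ok_zero[OF S] conv_zero)
lemma tmul_zero: "x \<in> tcarrier S \<Longrightarrow> tmul S x (tzero S) = tzero S"
  using tmul_comm[OF _ tzero_in] tzero_mul by simp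
lemma tmul_add_left: "x \<in> tcarrier S \<Longrightarrow> y \<in> tcarrier S \<Longrightarrow> z \<in> tcarrier S \<Longrightarrow>
    tmul S (tadd S x y) z = tadd S (tmul S x z) (tmul S y z)"
  by (auto elim!: tcarrierE simp: tmul_cls tadd_cls fm_ok_conv[OF S] fm_ok_add[OF S] conv_add_left)
lemma tmul_add_right: "x \<in> tcarrier S \<Longrightarrow> y \<in> tcarrier S \<Longrightarrow> z \<in> tcarrier S \<Longrightarrow>
    tmul S z (tadd S x y) = tadd S (tmul S z x) (tmul S z y)"
  using tmul_add_left tmul_comm tadd_in by metis

lemma tswap_add:
  assumes "x \<in> tcarrier S" "y \<in> tcarrier S"
  shows "tswap S (tadd S x y) = tadd S (tswap S x) (tswap S y)"
proof -
  obtain f g where f: "fm_ok S f" "x = cls S f" and g: "fm_ok S g" "y = cls S g"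
    using assms by (auto elim!: tcarrierE)
  have e: "(\<lambda>(a, b). f (b, a) + g (b, a)) = (\<lambda>p. (\<lambda>(a, b). f (b, a)) p + (\<lambda>(a, b). g (b, a)) p)"
    by (auto simp: fun_eq_iff)
  show ?thesis unfolding f g
    by (simp only: tadd_cls tswap_cls f g fm_ok_swap fm_ok_add[OF S] e)
qed
lemma tswap_mul: "x \<in> tcarrier S \<Longrightarrow> y \<in> tcarrier S \<Longrightarrow> tswap S (tmul S x y) = tmul S (tswap S x) (tswap S y)"
  by (auto elim!: tcarrierE simp: tswap_cls tmul_cls fm_ok_swap fm_ok_conv[OF S] swap_conv)
lemma tswap_tswap:
  assumes "x \<in> tcarrier S"
  shows "tswap S (tswap S x) = x"
proof -
  obtain f where f: "fm_ok S f" "x = cls S f"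
    using assms by (auto elim!: tcarrierE)
  have e: "(\<lambda>(a, b). (\<lambda>(a, b). f (b, a)) (b, a)) = f" by (auto simp: fun_eq_iff)
  show ?thesis unfolding f by (simp only: tswap_cls f fm_ok_swap e)
qed
lemma tswap_tp: "tswap S (tp S a b) = tp S b a"
  by (simp add: tp_def tswap_cls ok_delta delta_swap)
lemma tswap_zero: "tswap S (tzero S) = tzero S"
  by (simp add: tzero_def tswap_cls fm_ok_zero[OF S] case_prod_unfold)
lemma tswap_one: "tswap S (tone S) = tone S"
  by (simp add: tone_def tswap_tp)

lemma tp_mul: "tmul S (tp S a b) (tp S c d) = tp S (a * c) (b * d)"
  by (simp add: tp_def tmul_cls ok_delta conv_delta_delta)

lemma tp_add_left: "tp S (a + a') b = tadd S (tp S a b) (tp S a' b)"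
proof -
  have "cls S (delta (a + a') b) = cls S (\<lambda>p. delta a b p + delta a' b p)"
    by (rule cls_cong) (use relN.add1[of a a' b S] in \<open>simp add: algebra_simps\<close>)
  then show ?thesis by (simp add: tp_def tadd_cls ok_delta)
qed
lemma tp_add_right: "tp S a (b + b') = tadd S (tp S a b) (tp S a b')"
proof -
  have "cls S (delta a (b + b')) = cls S (\<lambda>p. delta a b p + delta a b' p)"
    by (rule cls_cong) (use relN.add2[of a b b' S] in \<open>simp add: algebra_simps\<close>)
  then show ?thesis by (simp add: tp_def tadd_cls ok_delta)
qed
lemma tp_zero_left: "tp S 0 b = tzero S"
proof -
  have "tp S 0 b = tadd S (tp S 0 b) (tp S 0 b)" using tp_add_left[of 0 0 b] by simp
  then have "tadd S (tp S 0 b) (tneg S (tp S 0 b)) = tadd S (tadd S (tp S 0 b) (tp S 0 b)) (tneg S (tp S 0 b))"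
    by simp
  then show ?thesis by (simp add: tadd_neg tadd_assoc tp_in tneg_in tadd_zero)
qed
lemma tp_zero_right: "tp S a 0 = tzero S"
proof -
  have "tp S a 0 = tadd S (tp S a 0) (tp S a 0)" using tp_add_right[of a 0 0] by simp
  then have "tadd S (tp S a 0) (tneg S (tp S a 0)) = tadd S (tadd S (tp S a 0) (tp S a 0)) (tneg S (tp S a 0))"
    by simp
  then show ?thesis by (simp add: tadd_neg tadd_assoc tp_in tneg_in tadd_zero)
qed
lemma tp_neg_left: "tneg S (tp S a b) = tp S (- a) b"
proof -
  have "tadd S (tp S a b) (tp S (- a) b) = tzero S" using tp_add_left[of a "-a" b] by (simp add: tp_zero_left)
  then have "tadd S (tneg S (tp S a b)) (tadd S (tp S a b) (tp S (- a) b)) = tneg S (tp S a b)"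
    by (simp add: tadd_zero tneg_in tp_in)
  then show ?thesis
    by (metis tadd_assoc tadd_comm tadd_neg tneg_in tp_in tzero_add)
qed
lemma tp_scalar: "c \<in> S \<Longrightarrow> tp S (c * a) b = tp S a (c * b)"
proof -
  assume c: "c \<in> S"
  have "(\<lambda>p. (delta (c * a) b p - c * delta a b p) - (delta a (c * b) p - c * delta a b p)) \<in> relN S"
    by (rule relN_diff[OF S relN.sc1[OF c] relN.sc2[OF c]])
  then show ?thesis unfolding tp_def by (intro cls_cong) simp
qed

lemma tmul_scalar_cls:
  assumes c: "c \<in> S" and f: "fm_ok S f"
  shows "tmul S (tp S c 1) (cls S f) = cls S (\<lambda>p. c * f p)"
proof -
  have fin: "finite (fsupp f)" and fS: "\<And>q. f q \<in> S" using f by (auto simp: fm_ok_def fsupp_def)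
  have e1: "conv (delta c 1) f = (\<lambda>p. \<Sum>q\<in>fsupp f. f q * delta (c * fst q) (snd q) p)"
    by (simp add: conv_delta_left'[OF fin])
  have e2: "(\<lambda>p. c * f p) = (\<lambda>p. \<Sum>q\<in>fsupp f. f q * (c * delta (fst q) (snd q) p))"
  proof
    fix p
    have "f p = (\<Sum>q\<in>fsupp f. f q * delta (fst q) (snd q) p)"
      by (subst fm_expand[OF fin subset_refl]) simp
    then show "c * f p = (\<Sum>q\<in>fsupp f. f q * (c * delta (fst q) (snd q) p))"
      by (simp add: sum_distrib_left ac_simps)
  qed
  have "(\<lambda>p. \<Sum>q\<in>fsupp f. f q * (delta (c * fst q) (snd q) p - c * delta (fst q) (snd q) p)) \<in> relN S"
    by (rule relN_sum) (use fin fS relN.sc1[OF c] in auto)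
  moreover have e2p: "c * f p = (\<Sum>q\<in>fsupp f. f q * (c * delta (fst q) (snd q) p))" for p
    using fun_cong[OF e2, of p] by simp
  ultimately have "(\<lambda>p. conv (delta c 1) f p - c * f p) \<in> relN S"
    unfolding e1 by (simp only: e2p) (simp add: right_diff_distrib sum_subtractf)
  then show ?thesis by (simp add: tp_def tmul_cls ok_delta f cls_cong)
qed

lemma tscalar_in: "c \<in> S \<Longrightarrow> x \<in> tcarrier S \<Longrightarrow> tmul S (tp S c 1) x \<in> tcarrier S"
  by (simp add: tmul_in tp_in)

end

locale val_loc = fixes v :: "'a::field \<Rightarrow> int" assumes dv: "discrete_valuation v"
begin

lemma v_mult: "x \<noteq> 0 \<Longrightarrow> y \<noteq> 0 \<Longrightarrow> v (x * y) = v x + v y"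
  using dv by (simp add: discrete_valuation_def)

lemma v_add: "x \<noteq> 0 \<Longrightarrow> y \<noteq> 0 \<Longrightarrow> x + y \<noteq> 0 \<Longrightarrow> min (v x) (v y) \<le> v (x + y)"
  using dv by (simp add: discrete_valuation_def)

lemma v_surj: "\<exists>x. x \<noteq> 0 \<and> v x = k"
  using dv by (simp add: discrete_valuation_def)

lemma v_one: "v 1 = 0"
  using v_mult[of 1 1] by simp

lemma v_minus_one: "v (-1) = 0"
  using v_mult[of "-1" "-1"] by (simp add: v_one)

lemma v_neg: "x \<noteq> 0 \<Longrightarrow> v (- x) = v x"
  using v_mult[of "-1" x] by (simp add: v_minus_one)

lemma v_inv: "x \<noteq> 0 \<Longrightarrow> v (inverse x) = - v x"
  using v_mult[of x "inverse x"] by (simp add: v_one)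

lemma v_pow: "x \<noteq> 0 \<Longrightarrow> v (x ^ k) = int k * v x"
  by (induction k) (auto simp: v_one v_mult algebra_simps)

lemma v_add_strict:
  assumes "x \<noteq> 0" "y \<noteq> 0" "v x < v y"
  shows "x + y \<noteq> 0 \<and> v (x + y) = v x"
proof -
  have xy: "x + y \<noteq> 0"
  proof
    assume "x + y = 0"
    then have "y = - x" by (simp add: eq_neg_iff_add_eq_0 add.commute)
    then show False using assms by (simp add: v_neg)
  qed
  have 1: "min (v x) (v y) \<le> v (x + y)" using v_add[OF assms(1,2) xy] .
  have "x = (x + y) + (- y)" by simp
  then have "min (v (x + y)) (v (- y)) \<le> v x" using v_add[OF xy, of "- y"] assms by auto
  then show ?thesis using 1 assms xy by (auto simp: v_neg)
qed

lemma mpow_iff: "x \<noteq> 0 \<Longrightarrow> x \<in> mpow v j \<longleftrightarrow> j \<le> v x"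
  by (simp add: mpow_def)
lemma mpow_zero[simp]: "0 \<in> mpow v j" by (simp add: mpow_def)

lemma mpow_add: "x \<in> mpow v j \<Longrightarrow> y \<in> mpow v j \<Longrightarrow> x + y \<in> mpow v j"
  using v_add[of x y] by (fastforce simp: mpow_def)
lemma mpow_neg: "x \<in> mpow v j \<Longrightarrow> - x \<in> mpow v j"
  by (cases "x = 0") (auto simp: mpow_def v_neg)
lemma mpow_diff: "x \<in> mpow v j \<Longrightarrow> y \<in> mpow v j \<Longrightarrow> x - y \<in> mpow v j"
  using mpow_add[of x j "- y"] mpow_neg[of y j] by simp
lemma mpow_mult: "x \<in> mpow v j \<Longrightarrow> y \<in> mpow v k \<Longrightarrow> x * y \<in> mpow v (j + k)"
  by (cases "x = 0"; cases "y = 0") (auto simp: mpow_def v_mult)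
lemma mpow_mono: "j \<le> k \<Longrightarrow> x \<in> mpow v k \<Longrightarrow> x \<in> mpow v j"
  by (auto simp: mpow_def)
lemma mpow_sum: "(\<And>i. i \<in> I \<Longrightarrow> f i \<in> mpow v j) \<Longrightarrow> sum f I \<in> mpow v j"
  by (induction I rule: infinite_finite_induct) (auto intro: mpow_add)
lemma mpow_v: "x \<in> mpow v (v x)" by (simp add: mpow_def)

lemma sum_distinct_val:
  assumes "finite L"
    and "\<And>l l'. l \<in> L \<Longrightarrow> l' \<in> L \<Longrightarrow> t l \<noteq> 0 \<Longrightarrow> t l' \<noteq> 0 \<Longrightarrow> l \<noteq> l' \<Longrightarrow> v (t l) \<noteq> v (t l')"
    and "\<exists>l\<in>L. t l \<noteq> 0"
  shows "sum t L \<noteq> 0 \<and> (\<exists>l\<in>L. t l \<noteq> 0 \<and> v (sum t L) = v (t l)) \<and> (\<forall>l\<in>L. t l \<noteq> 0 \<longrightarrow> v (sum t L) \<le> v (t l))"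
  using assms
proof (induction L rule: finite_induct)
  case empty then show ?case by simp
next
  case (insert a F)
  show ?case
  proof (cases "\<exists>l\<in>F. t l \<noteq> 0")
    case False
    then have s: "sum t F = 0" by simp
    with False insert.prems(2) show ?thesis using insert.hyps by auto
  next
    case True
    have IH: "sum t F \<noteq> 0 \<and> (\<exists>l\<in>F. t l \<noteq> 0 \<and> v (sum t F) = v (t l)) \<and> (\<forall>l\<in>F. t l \<noteq> 0 \<longrightarrow> v (sum t F) \<le> v (t l))"
      using insert.IH[OF _ True] insert.prems(1) by blast
    then obtain l1 where l1: "l1 \<in> F" "t l1 \<noteq> 0" "v (sum t F) = v (t l1)" by blast
    show ?thesis
    proof (cases "t a = 0")
      case True
      then show ?thesis using IH insert.hyps by auto
    next
      case False
      have ne: "v (t a) \<noteq> v (sum t F)" using insert.prems(1)[of a l1] l1 False insert.hyps by auto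
      show ?thesis
      proof (cases "v (t a) < v (sum t F)")
        case True
        from v_add_strict[OF False _ True] IH
        have "t a + sum t F \<noteq> 0 \<and> v (t a + sum t F) = v (t a)" by blast
        then show ?thesis using IH True False insert.hyps by fastforce
      next
        case False2: False
        then have lt: "v (sum t F) < v (t a)" using ne by simp
        from v_add_strict[OF _ False lt] IH
        have "sum t F + t a \<noteq> 0 \<and> v (sum t F + t a) = v (sum t F)" by blast
        then show ?thesis using IH lt False insert.hyps l1 by (fastforce simp: add.commute)
      qed
    qed
  qed
qed

end

lemma steinitz:
  fixes u :: "'i \<Rightarrow> 'a::field" and w :: "'j \<Rightarrow> 'a"
  assumes S: "subfield S" and J: "finite J"
  shows "finite I \<Longrightarrow> (\<forall>i\<in>I. \<exists>c. (\<forall>j\<in>J. c j \<in> S) \<and> u i = (\<Sum>j\<in>J. c j * w j))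
    \<Longrightarrow> card J < card I \<Longrightarrow> \<exists>c. (\<forall>i\<in>I. c i \<in> S) \<and> (\<exists>i\<in>I. c i \<noteq> 0) \<and> (\<Sum>i\<in>I. c i * u i) = 0"
  using J
proof (induction J arbitrary: I u rule: finite_induct)
  case empty
  then obtain i0 where i0: "i0 \<in> I" by fastforce
  have "(\<Sum>i\<in>I. (if i = i0 then 1 else 0) * u i) = (\<Sum>i\<in>I. if i = i0 then u i else 0)"
    by (rule sum.cong) auto
  also have "\<dots> = u i0" using empty.prems(1) i0 by simp
  also have "u i0 = 0" using empty.prems(2) i0 by auto
  finally show ?case using i0 S by (intro exI[of _ "\<lambda>i. if i = i0 then 1 else 0"]) (auto simp: sf0 sf1)
next
  case (insert j J)
  from insert.prems(2) obtain C where C: "\<forall>i\<in>I. (\<forall>j'\<in>insert j J. C i j' \<in> S) \<and> u i = (\<Sum>j'\<in>insert j J. C i j' * w j')"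
    by metis
  have uexp: "u i = C i j * w j + (\<Sum>j'\<in>J. C i j' * w j')" if "i \<in> I" for i
    using C that insert.hyps by simp
  show ?case
  proof (cases "\<forall>i\<in>I. C i j = 0")
    case True
    have "\<forall>i\<in>I. \<exists>c. (\<forall>j\<in>J. c j \<in> S) \<and> u i = (\<Sum>j\<in>J. c j * w j)"
      using uexp True C by (intro ballI, rule_tac x="C i" in exI) auto
    moreover have "card J < card I" using insert.prems(3) insert.hyps by simp
    ultimately show ?thesis using insert.IH[OF insert.prems(1)] by blast
  next
    case False
    then obtain p where p: "p \<in> I" "C p j \<noteq> 0" by blast
    define I' where "I' = I - {p}"
    define u' where "u' i = u i - (C i j / C p j) * u p" for i
    have finI': "finite I'" using insert.prems(1) by (simp add: I'_def)
    have cardI': "card J < card I'"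
      using insert.prems(1,3) insert.hyps p(1) by (simp add: I'_def card_Diff_singleton)
    have "\<forall>i\<in>I'. \<exists>c. (\<forall>j\<in>J. c j \<in> S) \<and> u' i = (\<Sum>j\<in>J. c j * w j)"
    proof
      fix i assume i: "i \<in> I'"
      then have iI: "i \<in> I" by (simp add: I'_def)
      have "u' i = (\<Sum>j'\<in>J. (C i j' - C i j / C p j * C p j') * w j')"
        unfolding u'_def using uexp[OF iI] uexp[OF p(1)] p(2)
        by (simp add: algebra_simps sum_distrib_left sum_subtractf)
      moreover have "\<forall>j'\<in>J. C i j' - C i j / C p j * C p j' \<in> S"
        using C iI p(1) S by (auto intro!: sf_diff sf_mult simp: divide_inverse intro: sf_inv)
      ultimately show "\<exists>c. (\<forall>j\<in>J. c j \<in> S) \<and> u' i = (\<Sum>j\<in>J. c j * w j)"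
        by (intro exI[where x="\<lambda>j'. C i j' - C i j / C p j * C p j'"]) simp
    qed
    from insert.IH[OF finI' this cardI'] obtain d where
      d: "\<forall>i\<in>I'. d i \<in> S" "\<exists>i\<in>I'. d i \<noteq> 0" "(\<Sum>i\<in>I'. d i * u' i) = 0" by blast
    define c where "c i = (if i = p then - (\<Sum>i\<in>I'. d i * (C i j / C p j)) else d i)" for i
    have "(\<Sum>i\<in>I. c i * u i) = c p * u p + (\<Sum>i\<in>I'. c i * u i)"
      unfolding I'_def using insert.prems(1) p(1) by (simp add: sum.remove)
    also have "(\<Sum>i\<in>I'. c i * u i) = (\<Sum>i\<in>I'. d i * u i)"
      by (rule sum.cong) (auto simp: c_def I'_def)
    also have "(\<Sum>i\<in>I'. d i * u i) = (\<Sum>i\<in>I'. d i * u' i) + (\<Sum>i\<in>I'. d i * (C i j / C p j)) * u p"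
      unfolding u'_def by (simp add: right_diff_distrib sum_subtractf sum_distrib_right mult.assoc)
    finally have "(\<Sum>i\<in>I. c i * u i) = 0" using d(3) by (simp add: c_def)
    moreover have "\<forall>i\<in>I. c i \<in> S"
      using d(1) C p S unfolding c_def I'_def
      by (auto intro!: sf_neg sf_sum sf_mult simp: divide_inverse intro: sf_inv)
    moreover have "\<exists>i\<in>I. c i \<noteq> 0" using d(2) unfolding c_def I'_def by auto
    ultimately show ?thesis by blast
  qed
qed

locale main_loc = tens_loc S + val_loc v
  for S :: "'a::field set" and v :: "'a \<Rightarrow> int" +
  fixes n :: nat and \<pi> :: 'a and res :: "'a \<Rightarrow> 'k::field"
  assumes ext: "ext_degree S n"
    and vals: "{v x | x. x \<in> S \<and> x \<noteq> 0} = {int n * z | z. True}"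
    and pi0: "\<pi> \<noteq> 0" and vpi: "v \<pi> = 1"
    and resm: "residue_map v res"
begin

lemma vS: "x \<in> S \<Longrightarrow> x \<noteq> 0 \<Longrightarrow> int n dvd v x"
proof -
  assume "x \<in> S" "x \<noteq> 0"
  then have "v x \<in> {v x | x. x \<in> S \<and> x \<noteq> 0}" by blast
  then have "v x \<in> {int n * z | z. True}" using vals by simp
  then show ?thesis by auto
qed

lemma n_pos: "0 < n"
proof (rule ccontr)
  assume "\<not> 0 < n"
  then have n: "n = 0" by simp
  from ext obtain b :: "nat \<Rightarrow> 'a" where "\<forall>x. \<exists>c. (\<forall>i<n. c i \<in> S) \<and> x = (\<Sum>i<n. c i * b i)"
    unfolding ext_degree_def by blast
  then obtain c where "(1::'a) = (\<Sum>i<n. c i * b i)" by blast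
  with n show False by simp
qed

lemma pipow_ne: "\<pi> ^ l \<noteq> 0" using pi0 by simp
lemma v_pipow: "v (\<pi> ^ l) = int l" using v_pow[OF pi0] vpi by simp

lemma v_term: "c \<in> S \<Longrightarrow> c \<noteq> 0 \<Longrightarrow> v (c * \<pi> ^ l) = v c + int l"
  using v_mult[OF _ pipow_ne] v_pipow by simp

lemma v_term_mod: "c \<in> S \<Longrightarrow> c \<noteq> 0 \<Longrightarrow> l < n \<Longrightarrow> v (c * \<pi> ^ l) mod int n = int l"
proof -
  assume a: "c \<in> S" "c \<noteq> 0" "l < n"
  obtain z where z: "v c = int n * z" using vS[OF a(1,2)] by (auto elim: dvdE)
  show ?thesis using a by (simp add: v_term z)
qed

lemma distinct_terms:
  assumes "\<forall>l<n. c l \<in> S"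
  shows "\<And>l l'. l \<in> {..<n} \<Longrightarrow> l' \<in> {..<n} \<Longrightarrow> c l * \<pi> ^ l \<noteq> 0 \<Longrightarrow> c l' * \<pi> ^ l' \<noteq> 0 \<Longrightarrow> l \<noteq> l'
     \<Longrightarrow> v (c l * \<pi> ^ l) \<noteq> v (c l' * \<pi> ^ l')"
proof -
  fix l l' assume a: "l \<in> {..<n}" "l' \<in> {..<n}" "c l * \<pi> ^ l \<noteq> 0" "c l' * \<pi> ^ l' \<noteq> 0" "l \<noteq> l'"
  have "v (c l * \<pi> ^ l) mod int n = int l" "v (c l' * \<pi> ^ l') mod int n = int l'"
    using a assms by (auto intro!: v_term_mod)
  then show "v (c l * \<pi> ^ l) \<noteq> v (c l' * \<pi> ^ l')" using a(5) by auto
qed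

lemma indep:
  assumes "\<forall>l<n. c l \<in> S" "(\<Sum>l<n. c l * \<pi> ^ l) = 0"
  shows "\<forall>l<n. c l = 0"
proof (rule ccontr)
  assume "\<not> (\<forall>l<n. c l = 0)"
  then have "\<exists>l\<in>{..<n}. c l * \<pi> ^ l \<noteq> 0" using pi0 by auto
  from sum_distinct_val[OF finite_lessThan distinct_terms[OF assms(1)] this] assms(2)
  show False by simp
qed

lemma span: "\<exists>c. (\<forall>l<n. c l \<in> S) \<and> x = (\<Sum>l<n. c l * \<pi> ^ l)"
proof (rule ccontr)
  assume nx: "\<not> ?thesis"
  obtain b :: "nat \<Rightarrow> 'a" where
    bsp: "\<forall>x. \<exists>c. (\<forall>i<n. c i \<in> S) \<and> x = (\<Sum>i<n. c i * b i)"
    using ext unfolding ext_degree_def by blast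
  define u where "u l = (if l < n then \<pi> ^ l else x)" for l
  have "\<forall>i\<in>{..n}. \<exists>c. (\<forall>j\<in>{..<n}. c j \<in> S) \<and> u i = (\<Sum>j\<in>{..<n}. c j * b j)"
  proof
    fix i
    from bsp obtain c where "(\<forall>i<n. c i \<in> S) \<and> u i = (\<Sum>i<n. c i * b i)" by blast
    then show "\<exists>c. (\<forall>j\<in>{..<n}. c j \<in> S) \<and> u i = (\<Sum>j\<in>{..<n}. c j * b j)" by auto
  qed
  from steinitz[OF S finite_lessThan finite_atMost this] obtain c where
    c: "\<forall>i\<in>{..n}. c i \<in> S" "\<exists>i\<in>{..n}. c i \<noteq> 0" "(\<Sum>i\<in>{..n}. c i * u i) = 0"
    by auto
  have e: "(\<Sum>i\<in>{..n}. c i * u i) = (\<Sum>i<n. c i * \<pi> ^ i) + c n * x"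
    by (simp add: lessThan_Suc_atMost[symmetric] u_def)
  show False
  proof (cases "c n = 0")
    case True
    then have "(\<Sum>i<n. c i * \<pi> ^ i) = 0" using c(3) e by simp
    from indep[OF _ this] c(1) have "\<forall>l<n. c l = 0" by auto
    with c(2) True show False by (auto simp: le_less)
  next
    case False
    have h: "c n * x = - (\<Sum>i<n. c i * \<pi>^i)" using c(3) e by (simp add: eq_neg_iff_add_eq_0 add.commute)
    have "x = (c n * x) / c n" using False by simp
    also have "\<dots> = - (\<Sum>i<n. c i * \<pi>^i) / c n" using h by simp
    also have "\<dots> = (\<Sum>i<n. - (c i * \<pi>^i) / c n)" by (simp only: sum_negf[symmetric] sum_divide_distrib)
    also have "\<dots> = (\<Sum>i<n. (- c i / c n) * \<pi> ^ i)" by (rule sum.cong[OF refl]) (simp only: times_divide_eq_left mult_minus_left)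
    finally have "x = (\<Sum>i<n. (- c i / c n) * \<pi> ^ i)" .
    moreover have "\<forall>l<n. - c l / c n \<in> S" using c(1) S
      by (auto intro!: sf_mult sf_neg sf_inv simp: divide_inverse)
    ultimately have "\<exists>c'. (\<forall>l<n. c' l \<in> S) \<and> x = (\<Sum>l<n. c' l * \<pi> ^ l)"
      by (intro exI[of _ "\<lambda>l. - c l / c n"]) simp
    with nx show False by blast
  qed
qed

definition cf :: "'a \<Rightarrow> nat \<Rightarrow> 'a" where
  "cf x = (SOME c. (\<forall>l<n. c l \<in> S) \<and> x = (\<Sum>l<n. c l * \<pi> ^ l))"

lemma cf_prop: "(\<forall>l<n. cf x l \<in> S) \<and> x = (\<Sum>l<n. cf x l * \<pi> ^ l)"
  unfolding cf_def by (rule someI_ex[OF span])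

lemma cf_S: "l < n \<Longrightarrow> cf x l \<in> S" using cf_prop by blast
lemma cf_sum: "x = (\<Sum>l<n. cf x l * \<pi> ^ l)" using cf_prop by blast
lemma cf_sum': "(\<Sum>l<n. cf x l * \<pi> ^ l) = x" using cf_prop by simp

lemma cf_unique:
  assumes "\<forall>l<n. c l \<in> S" "x = (\<Sum>l<n. c l * \<pi> ^ l)" "l < n"
  shows "cf x l = c l"
proof -
  have "(\<Sum>l<n. (cf x l - c l) * \<pi> ^ l) = 0"
  proof -
    have "(\<Sum>l<n. cf x l * \<pi> ^ l) = (\<Sum>l<n. c l * \<pi> ^ l)" using assms(2) by (simp only: cf_sum')
    then show ?thesis by (simp add: algebra_simps sum_subtractf)
  qed
  from indep[OF _ this] assms cf_S show ?thesis by (auto intro: sf_diff[OF S])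
qed

lemma cf_add: "l < n \<Longrightarrow> cf (x + y) l = cf x l + cf y l"
  by (rule cf_unique) (auto intro: sf_add[OF S] cf_S simp: distrib_right sum.distrib cf_sum[symmetric])

lemma cf_smul: "s \<in> S \<Longrightarrow> l < n \<Longrightarrow> cf (s * x) l = s * cf x l"
proof (rule cf_unique)
  assume s: "s \<in> S"
  show "\<forall>l<n. s * cf x l \<in> S" using s cf_S by (auto intro: sf_mult[OF S])
  show "s * x = (\<Sum>l<n. s * cf x l * \<pi> ^ l)"
    by (simp add: sum_distrib_left[symmetric] mult.assoc cf_sum')
qed

lemma cf_zero: "l < n \<Longrightarrow> cf 0 l = 0"
  using cf_smul[of 0 l 0] sf0[OF S] by simp

lemma cf_pipow: "k < n \<Longrightarrow> l < n \<Longrightarrow> cf (\<pi> ^ k) l = (if l = k then 1 else 0)"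
proof (rule cf_unique)
  assume k: "k < n"
  show "\<forall>l<n. (if l = k then 1 else 0) \<in> S" using S by (simp add: sf0 sf1)
  have "(\<Sum>l<n. (if l = k then 1 else 0) * \<pi> ^ l) = (\<Sum>l<n. if l = k then \<pi> ^ l else 0)"
    by (rule sum.cong) auto
  also have "\<dots> = \<pi> ^ k" using k by simp
  finally show "\<pi> ^ k = (\<Sum>l<n. (if l = k then 1 else 0) * \<pi> ^ l)" by simp
qed

lemma cf_Selem: "s \<in> S \<Longrightarrow> l < n \<Longrightarrow> cf s l = (if l = 0 then s else 0)"
  using cf_smul[of s l 1] cf_pipow[of 0 l] n_pos by simp

lemma cf_val:
  assumes x: "x \<noteq> 0"
  defines "l0 \<equiv> nat (v x mod int n)"
  shows "l0 < n" "cf x l0 \<noteq> 0" "v (cf x l0 * \<pi> ^ l0) = v x"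
    "\<And>l. l < n \<Longrightarrow> cf x l * \<pi> ^ l \<in> mpow v (v x)"
    "\<And>l. l < n \<Longrightarrow> l \<noteq> l0 \<Longrightarrow> cf x l * \<pi> ^ l \<in> mpow v (v x + 1)"
proof -
  have ex: "\<exists>l\<in>{..<n}. cf x l * \<pi> ^ l \<noteq> 0"
  proof (rule ccontr)
    assume "\<not> ?thesis"
    then have "(\<Sum>l<n. cf x l * \<pi> ^ l) = 0" using pi0 by simp
    then have "x = 0" by (simp only: cf_sum')
    with x show False by simp
  qed
  have cS: "\<forall>l<n. cf x l \<in> S" using cf_S by blast
  from sum_distinct_val[OF finite_lessThan distinct_terms[OF cS] ex, folded cf_sum[of x]]
  obtain l1 where l1: "l1 < n" "cf x l1 * \<pi> ^ l1 \<noteq> 0" "v x = v (cf x l1 * \<pi> ^ l1)"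
    and le: "\<forall>l<n. cf x l * \<pi> ^ l \<noteq> 0 \<longrightarrow> v x \<le> v (cf x l * \<pi> ^ l)" by auto
  have "v x mod int n = int l1" using l1 v_term_mod[OF cf_S[OF l1(1)] _ l1(1)] by auto
  then have l10: "l1 = l0" unfolding l0_def by simp
  show "l0 < n" "cf x l0 \<noteq> 0" "v (cf x l0 * \<pi> ^ l0) = v x" using l1 l10 by auto
  show "cf x l * \<pi> ^ l \<in> mpow v (v x)" if "l < n" for l
    using le that pi0 by (auto simp: mpow_def)
  show "cf x l * \<pi> ^ l \<in> mpow v (v x + 1)" if "l < n" "l \<noteq> l0" for l
  proof (cases "cf x l * \<pi> ^ l = 0")
    case False
    have "v (cf x l * \<pi> ^ l) mod int n = int l" using v_term_mod[OF cf_S[OF that(1)] _ that(1)] False by auto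
    then have "v (cf x l * \<pi> ^ l) \<noteq> v x" using \<open>v x mod int n = int l1\<close> l10 that by auto
    then show ?thesis using le that False by (auto simp: mpow_def)
  qed (use pi0 in simp)
qed

lemma cf_mpow: "x \<in> mpow v j \<Longrightarrow> l < n \<Longrightarrow> cf x l * \<pi> ^ l \<in> mpow v j"
proof (cases "x = 0")
  case True
  assume "l < n" then show ?thesis using True by (simp add: cf_zero)
next
  case False
  assume a: "x \<in> mpow v j" "l < n"
  then have "j \<le> v x" using False by (simp add: mpow_def)
  then show ?thesis using cf_val(4)[OF False a(2)] by (rule mpow_mono)
qed

lemma cf_mpow': "x \<in> mpow v j \<Longrightarrow> l < n \<Longrightarrow> cf x l \<in> mpow v (j - int l)"
proof -
  assume a: "x \<in> mpow v j" "l < n"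
  have "cf x l * \<pi> ^ l * inverse (\<pi> ^ l) \<in> mpow v (j + - int l)"
    by (rule mpow_mult[OF cf_mpow[OF a]]) (use v_inv[OF pipow_ne, of l] v_pipow[of l] in \<open>simp add: mpow_def\<close>)
  moreover have "cf x l * \<pi> ^ l * inverse (\<pi> ^ l) = cf x l"
    using pipow_ne[of l] by (simp add: mult.assoc right_inverse)
  ultimately show ?thesis by simp
qed

lemma cf_lead:
  assumes x: "x \<noteq> 0"
  shows "x - cf x (nat (v x mod int n)) * \<pi> ^ nat (v x mod int n) \<in> mpow v (v x + 1)"
proof -
  let ?l0 = "nat (v x mod int n)"
  have "x - cf x ?l0 * \<pi> ^ ?l0 = (\<Sum>l\<in>{..<n} - {?l0}. cf x l * \<pi> ^ l)"
  proof -
    have "(\<Sum>l<n. cf x l * \<pi> ^ l) - cf x ?l0 * \<pi> ^ ?l0 = (\<Sum>l\<in>{..<n} - {?l0}. cf x l * \<pi> ^ l)"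
      using cf_val(1)[OF x] by (simp add: sum.remove)
    then show ?thesis by (simp only: cf_sum')
  qed
  also have "\<dots> \<in> mpow v (v x + 1)" by (rule mpow_sum) (use cf_val(5)[OF x] in auto)
  finally show ?thesis .
qed

lemma res_add: "x \<in> vring v \<Longrightarrow> y \<in> vring v \<Longrightarrow> res (x + y) = res x + res y"
  using resm by (simp add: residue_map_def)
lemma res_mult: "x \<in> vring v \<Longrightarrow> y \<in> vring v \<Longrightarrow> res (x * y) = res x * res y"
  using resm by (simp add: residue_map_def)
lemma res_one: "res 1 = 1" using resm by (simp add: residue_map_def)
lemma res_zero_iff: "x \<in> vring v \<Longrightarrow> res x = 0 \<longleftrightarrow> x \<in> mpow v 1"
  using resm by (simp add: residue_map_def)
lemma res_surj: "\<exists>x\<in>vring v. res x = y"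
  using resm unfolding residue_map_def by (metis UNIV_I imageE)
lemma vring_iff: "x \<in> vring v \<longleftrightarrow> x \<in> mpow v 0" by (simp add: vring_def)
lemma res_0: "res 0 = 0" using res_zero_iff[of 0] by (simp add: vring_iff)
lemma res_neg: "x \<in> vring v \<Longrightarrow> res (- x) = - res x"
proof -
  assume "x \<in> vring v"
  then have "res x + res (- x) = 0" using res_add[of x "-x"] mpow_neg[of x 0] by (simp add: vring_iff res_0)
  then show ?thesis by (metis neg_eq_iff_add_eq_0)
qed
lemma res_diff: "x \<in> vring v \<Longrightarrow> y \<in> vring v \<Longrightarrow> res (x - y) = res x - res y"
  using res_add[of x "-y"] res_neg[of y] mpow_neg[of y 0] by (simp add: vring_iff)
lemma res_eq: "x \<in> vring v \<Longrightarrow> y \<in> vring v \<Longrightarrow> x - y \<in> mpow v 1 \<Longrightarrow> res x = res y"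
  using res_diff[of x y] res_zero_iff[of "x - y"] mpow_diff[of x 0 y] by (simp add: vring_iff)
lemma mpow1_vring: "x \<in> mpow v 1 \<Longrightarrow> x \<in> vring v" using mpow_mono[of 0 1 x] by (simp add: vring_iff)

lemma res_lift:
  assumes u: "u \<in> vring v"
  shows "\<exists>s\<in>S. s \<in> vring v \<and> res s = res u"
proof (cases "u \<in> mpow v 1")
  case True
  then show ?thesis using u S res_0 res_zero_iff[OF u] by (intro bexI[of _ 0]) (auto simp: sf0 vring_iff)
next
  case False
  then have u0: "u \<noteq> 0" and vu: "v u = 0" using u by (auto simp: vring_iff mpow_def)
  then have l0: "nat (v u mod int n) = 0" by simp
  have s: "cf u 0 \<in> S" using cf_S n_pos by simp
  have vs: "v (cf u 0) = 0" using cf_val(3)[OF u0] l0 vu by simp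
  have "cf u 0 \<noteq> 0" using cf_val(2)[OF u0] l0 by simp
  then have sv: "cf u 0 \<in> vring v" using vs by (simp add: vring_iff mpow_def)
  have "u - cf u 0 \<in> mpow v 1" using cf_lead[OF u0] l0 vu by simp
  then show ?thesis using s sv res_eq[OF u sv] by auto
qed

end

context tens_loc
begin

definition eqv :: "'a fm \<Rightarrow> 'a fm \<Rightarrow> bool" where
  "eqv f g \<longleftrightarrow> (\<lambda>p. f p - g p) \<in> relN S"

lemma eqv_refl: "eqv f f" by (simp add: eqv_def relN.zero)
lemma eqv_sym: "eqv f g \<Longrightarrow> eqv g f"
  unfolding eqv_def using relN_neg[OF S] by fastforce
lemma eqv_trans: "eqv f g \<Longrightarrow> eqv g h \<Longrightarrow> eqv f h"
  unfolding eqv_def using relN.plus by fastforce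
lemma eqv_sum:
  assumes "finite I" "\<And>i. i \<in> I \<Longrightarrow> c i \<in> S" "\<And>i. i \<in> I \<Longrightarrow> eqv (F i) (G i)"
  shows "eqv (\<lambda>p. \<Sum>i\<in>I. c i * F i p) (\<lambda>p. \<Sum>i\<in>I. c i * G i p)"
proof -
  have "(\<lambda>p. \<Sum>i\<in>I. c i * (F i p - G i p)) \<in> relN S"
    using assms by (intro relN_sum) (auto simp: eqv_def)
  then show ?thesis by (simp add: eqv_def right_diff_distrib sum_subtractf)
qed
lemma eqv_sum1:
  assumes "finite I" "\<And>i. i \<in> I \<Longrightarrow> eqv (F i) (G i)"
  shows "eqv (\<lambda>p. \<Sum>i\<in>I. F i p) (\<lambda>p. \<Sum>i\<in>I. G i p)"
  using eqv_sum[OF assms(1), of "\<lambda>_. 1" F G] assms(2) sf1[OF S] by simp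
lemma eqv_cls: "eqv f g \<Longrightarrow> cls S f = cls S g"
  unfolding eqv_def by (rule cls_cong)

lemma delta_zero_right: "delta a 0 \<in> relN S"
proof -
  have "(\<lambda>p. delta a (0 + 0) p - delta a 0 p - delta a 0 p) \<in> relN S" by (rule relN.add2)
  from relN_neg[OF S this] show ?thesis by simp
qed
lemma delta_zero_left: "delta 0 b \<in> relN S"
proof -
  have "(\<lambda>p. delta (0 + 0) b p - delta 0 b p - delta 0 b p) \<in> relN S" by (rule relN.add1)
  from relN_neg[OF S this] show ?thesis by simp
qed

lemma delta_sum_right:
  assumes "finite Q"
  shows "eqv (delta a (\<Sum>q\<in>Q. g q)) (\<lambda>p. \<Sum>q\<in>Q. delta a (g q) p)"
  using assms
proof (induction Q rule: finite_induct)
  case empty then show ?case using delta_zero_right by (simp add: eqv_def)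
next
  case (insert x F)
  have 1: "eqv (delta a (g x + (\<Sum>q\<in>F. g q))) (\<lambda>p. delta a (g x) p + delta a (\<Sum>q\<in>F. g q) p)"
    using relN.add2[of a "g x" "\<Sum>q\<in>F. g q" S] by (simp add: eqv_def algebra_simps)
  have 2: "eqv (\<lambda>p. delta a (g x) p + delta a (\<Sum>q\<in>F. g q) p) (\<lambda>p. delta a (g x) p + (\<Sum>q\<in>F. delta a (g q) p))"
    using insert.IH by (simp add: eqv_def)
  from eqv_trans[OF 1 2] insert.hyps show ?case by simp
qed

lemma delta_sum_left:
  assumes "finite Q"
  shows "eqv (delta (\<Sum>q\<in>Q. g q) b) (\<lambda>p. \<Sum>q\<in>Q. delta (g q) b p)"
  using assms
proof (induction Q rule: finite_induct)
  case empty then show ?case using delta_zero_left by (simp add: eqv_def)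
next
  case (insert x F)
  have 1: "eqv (delta (g x + (\<Sum>q\<in>F. g q)) b) (\<lambda>p. delta (g x) b p + delta (\<Sum>q\<in>F. g q) b p)"
    using relN.add1[of "g x" "\<Sum>q\<in>F. g q" b S] by (simp add: eqv_def algebra_simps)
  have 2: "eqv (\<lambda>p. delta (g x) b p + delta (\<Sum>q\<in>F. g q) b p) (\<lambda>p. delta (g x) b p + (\<Sum>q\<in>F. delta (g q) b p))"
    using insert.IH by (simp add: eqv_def)
  from eqv_trans[OF 1 2] insert.hyps show ?case by simp
qed

lemma delta_scalar_move: "c \<in> S \<Longrightarrow> eqv (delta (c * a) b) (delta a (c * b))"
proof -
  assume c: "c \<in> S"
  have "(\<lambda>p. (delta (c * a) b p - c * delta a b p) - (delta a (c * b) p - c * delta a b p)) \<in> relN S"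
    by (rule relN_diff[OF S relN.sc1[OF c] relN.sc2[OF c]])
  then show ?thesis by (simp add: eqv_def)
qed

lemma delta_scalar_right: "c \<in> S \<Longrightarrow> eqv (delta a (c * b)) (\<lambda>p. c * delta a b p)"
  using relN.sc2 by (simp add: eqv_def)

end

context main_loc
begin

definition Bf :: "'a fm \<Rightarrow> nat \<Rightarrow> 'a" where
  "Bf f l = (\<Sum>p\<in>fsupp f. f p * (cf (fst p) l * snd p))"

lemma Bf_eq:
  assumes "finite A" "fsupp f \<subseteq> A"
  shows "Bf f l = (\<Sum>p\<in>A. f p * (cf (fst p) l * snd p))"
  unfolding Bf_def by (rule sum.mono_neutral_left) (use assms in \<open>auto simp: fsupp_def\<close>)

lemma Bf_add: "finite (fsupp f) \<Longrightarrow> finite (fsupp g) \<Longrightarrow> Bf (\<lambda>p. f p + g p) l = Bf f l + Bf g l"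
proof -
  assume fin: "finite (fsupp f)" "finite (fsupp g)"
  let ?A = "fsupp f \<union> fsupp g"
  have s: "fsupp (\<lambda>p. f p + g p) \<subseteq> ?A" "fsupp f \<subseteq> ?A" "fsupp g \<subseteq> ?A" by (auto simp: fsupp_def)
  show ?thesis using fin
    by (simp add: Bf_eq[OF _ s(1)] Bf_eq[OF _ s(2)] Bf_eq[OF _ s(3)] distrib_right sum.distrib)
qed

lemma Bf_sc: "finite (fsupp f) \<Longrightarrow> Bf (\<lambda>p. c * f p) l = c * Bf f l"
proof -
  assume fin: "finite (fsupp f)"
  have s: "fsupp (\<lambda>p. c * f p) \<subseteq> fsupp f" by (auto simp: fsupp_def)
  have "Bf (\<lambda>p. c * f p) l = (\<Sum>p\<in>fsupp f. c * f p * (cf (fst p) l * snd p))" by (rule Bf_eq[OF fin s])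
  then show ?thesis by (simp add: Bf_def sum_distrib_left mult.assoc)
qed

lemma Bf_neg: "finite (fsupp f) \<Longrightarrow> Bf (\<lambda>p. - f p) l = - Bf f l"
  using Bf_sc[of f "-1" l] by simp

lemma Bf_diff: "finite (fsupp f) \<Longrightarrow> finite (fsupp g) \<Longrightarrow> Bf (\<lambda>p. f p - g p) l = Bf f l - Bf g l"
  using Bf_add[of f "\<lambda>p. - g p" l] Bf_neg[of g l] by simp

lemma Bf_delta: "Bf (delta a b) l = cf a l * b"
proof -
  have s: "fsupp (delta a b) \<subseteq> {(a, b)}" by (auto simp: fsupp_def delta_def)
  have "Bf (delta a b) l = (\<Sum>p\<in>{(a,b)}. delta a b p * (cf (fst p) l * snd p))" by (rule Bf_eq[OF _ s]) simp
  then show ?thesis by (simp add: delta_def)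
qed

lemma Bf_zero: "Bf (\<lambda>_. 0) l = 0" by (simp add: Bf_def fsupp_def)

lemma Bf_relN:
  assumes "r \<in> relN S" "l < n"
  shows "Bf r l = 0"
  using assms(1)
proof (induction rule: relN.induct)
  case zero then show ?case by (simp add: Bf_zero)
next
  case (add1 a a' b) then show ?case using assms(2) by (simp add: Bf_diff Bf_add Bf_delta cf_add algebra_simps)
next
  case (add2 a b b') then show ?case by (simp add: Bf_diff Bf_add Bf_delta algebra_simps)
next
  case (sc1 c a b) then show ?case using assms(2) by (simp add: Bf_diff Bf_add Bf_sc Bf_delta cf_smul)
next
  case (sc2 c a b) then show ?case by (simp add: Bf_diff Bf_add Bf_sc Bf_delta)
next
  case (plus f g) then show ?case by (simp add: Bf_add relN_fin[OF S])
next
  case (smult c f) then show ?case by (simp add: Bf_sc relN_fin[OF S])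
qed

definition Phi :: "'a tens \<Rightarrow> nat \<Rightarrow> 'a" where
  "Phi x l = Bf (SOME f. f \<in> x) l"

lemma Phi_cls:
  assumes f: "fm_ok S f" and l: "l < n"
  shows "Phi (cls S f) l = Bf f l"
proof -
  let ?g = "SOME g. g \<in> cls S f"
  have g: "?g \<in> cls S f" by (rule someI[of "\<lambda>g. g \<in> cls S f" f, OF cls_self[OF f]])
  then have r: "(\<lambda>p. f p - ?g p) \<in> relN S" and gok: "fm_ok S ?g" by (auto simp: cls_def)
  have "Bf (\<lambda>p. f p - ?g p) l = 0" by (rule Bf_relN[OF r l])
  then show ?thesis using f gok by (simp add: Phi_def Bf_diff fm_ok_iff)
qed

lemma fin_ok: "fm_ok S f \<Longrightarrow> finite (fsupp f)" by (simp add: fm_ok_iff)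

lemma Phi_tadd: "x \<in> tcarrier S \<Longrightarrow> y \<in> tcarrier S \<Longrightarrow> l < n \<Longrightarrow> Phi (tadd S x y) l = Phi x l + Phi y l"
  by (auto elim!: tcarrierE simp: tadd_cls Phi_cls fm_ok_add[OF S] Bf_add fin_ok)
lemma Phi_tneg: "x \<in> tcarrier S \<Longrightarrow> l < n \<Longrightarrow> Phi (tneg S x) l = - Phi x l"
  by (auto elim!: tcarrierE simp: tneg_cls Phi_cls fm_ok_neg[OF S] Bf_neg fin_ok)
lemma Phi_tsub: "x \<in> tcarrier S \<Longrightarrow> y \<in> tcarrier S \<Longrightarrow> l < n \<Longrightarrow> Phi (tsub S x y) l = Phi x l - Phi y l"
  by (simp add: tsub_def Phi_tadd Phi_tneg tneg_in)
lemma Phi_tp: "l < n \<Longrightarrow> Phi (tp S a b) l = cf a l * b"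
  by (simp add: tp_def Phi_cls ok_delta Bf_delta)
lemma Phi_tzero: "l < n \<Longrightarrow> Phi (tzero S) l = 0"
  by (simp add: tzero_def Phi_cls fm_ok_zero[OF S] Bf_zero)
lemma Phi_scalar: "c \<in> S \<Longrightarrow> x \<in> tcarrier S \<Longrightarrow> l < n \<Longrightarrow> Phi (tmul S (tp S c 1) x) l = c * Phi x l"
  by (auto elim!: tcarrierE simp: tmul_scalar_cls Phi_cls fm_ok_sc[OF S] Bf_sc fin_ok)

lemma tsum_in: "(\<And>k. k < m \<Longrightarrow> y k \<in> tcarrier S) \<Longrightarrow> tsum S y m \<in> tcarrier S"
  by (induction m) (auto simp: tzero_in tadd_in)

lemma Phi_tsum: "(\<And>k. k < m \<Longrightarrow> y k \<in> tcarrier S) \<Longrightarrow> l < n \<Longrightarrow> Phi (tsum S y m) l = (\<Sum>k<m. Phi (y k) l)"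
  by (induction m) (auto simp: Phi_tzero Phi_tadd tsum_in)

definition Dexp :: "'a fm \<Rightarrow> 'a fm" where
  "Dexp f = (\<lambda>p. \<Sum>l<n. delta (\<pi> ^ l) (Bf f l) p)"

lemma delta_expand: "eqv (delta a b) (\<lambda>p. \<Sum>l<n. delta (\<pi> ^ l) (cf a l * b) p)"
proof -
  have 1: "eqv (delta (\<Sum>l<n. cf a l * \<pi> ^ l) b) (\<lambda>p. \<Sum>l<n. delta (cf a l * \<pi> ^ l) b p)"
    by (rule delta_sum_left) simp
  have 2: "eqv (\<lambda>p. \<Sum>l<n. delta (cf a l * \<pi> ^ l) b p) (\<lambda>p. \<Sum>l<n. delta (\<pi> ^ l) (cf a l * b) p)"
    by (rule eqv_sum1) (auto intro: delta_scalar_move cf_S)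
  show ?thesis using eqv_trans[OF 1 2] by (simp add: cf_sum')
qed

lemma Dexp_eqv:
  assumes f: "fm_ok S f"
  shows "eqv f (Dexp f)"
proof -
  let ?A = "fsupp f"
  have fin: "finite ?A" and fS: "\<And>q. f q \<in> S" using f by (auto simp: fm_ok_def fsupp_def)
  have 0: "f = (\<lambda>p. \<Sum>q\<in>?A. f q * delta (fst q) (snd q) p)" by (rule fm_expand[OF fin subset_refl])
  have 1: "eqv (\<lambda>p. \<Sum>q\<in>?A. f q * delta (fst q) (snd q) p)
               (\<lambda>p. \<Sum>q\<in>?A. f q * (\<Sum>l<n. delta (\<pi> ^ l) (cf (fst q) l * snd q) p))"
    by (rule eqv_sum[OF fin]) (auto simp: fS delta_expand)
  have e2: "(\<lambda>p. \<Sum>q\<in>?A. f q * (\<Sum>l<n. delta (\<pi> ^ l) (cf (fst q) l * snd q) p))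
      = (\<lambda>p. \<Sum>l<n. \<Sum>q\<in>?A. f q * delta (\<pi> ^ l) (cf (fst q) l * snd q) p)"
    by (simp add: sum_distrib_left sum.swap[of _ ?A])
  have 3: "eqv (\<lambda>p. \<Sum>l<n. \<Sum>q\<in>?A. f q * delta (\<pi> ^ l) (cf (fst q) l * snd q) p)
               (\<lambda>p. \<Sum>l<n. \<Sum>q\<in>?A. delta (\<pi> ^ l) (f q * (cf (fst q) l * snd q)) p)"
  proof (rule eqv_sum1, simp)
    fix l
    show "eqv (\<lambda>p. \<Sum>q\<in>?A. f q * delta (\<pi> ^ l) (cf (fst q) l * snd q) p)
               (\<lambda>p. \<Sum>q\<in>?A. delta (\<pi> ^ l) (f q * (cf (fst q) l * snd q)) p)"
      by (rule eqv_sym, rule eqv_sum1[OF fin]) (auto intro: delta_scalar_right fS)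
  qed
  have 4: "eqv (\<lambda>p. \<Sum>l<n. \<Sum>q\<in>?A. delta (\<pi> ^ l) (f q * (cf (fst q) l * snd q)) p) (Dexp f)"
    unfolding Dexp_def Bf_def
    by (rule eqv_sum1, simp, rule eqv_sym, rule delta_sum_right[OF fin])
  show ?thesis
    by (subst 0) (rule eqv_trans[OF 1, unfolded e2, OF eqv_trans[OF 3 4]])
qed

lemma Phi_inj:
  assumes x: "x \<in> tcarrier S" and y: "y \<in> tcarrier S" and e: "\<And>l. l < n \<Longrightarrow> Phi x l = Phi y l"
  shows "x = y"
proof -
  obtain f g where f: "fm_ok S f" "x = cls S f" and g: "fm_ok S g" "y = cls S g"
    using x y by (auto elim!: tcarrierE)
  have "Dexp f = Dexp g" unfolding Dexp_def using e f g by (auto simp: Phi_cls)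
  then show ?thesis using eqv_cls[OF Dexp_eqv[OF f(1)]] eqv_cls[OF Dexp_eqv[OF g(1)]] f g by simp
qed

definition mk :: "(nat \<Rightarrow> 'a) \<Rightarrow> 'a tens" where
  "mk b = tsum S (\<lambda>l. tp S (\<pi> ^ l) (b l)) n"

lemma mk_in: "mk b \<in> tcarrier S" by (simp add: mk_def tsum_in tp_in)

lemma Phi_mk: "l < n \<Longrightarrow> Phi (mk b) l = b l"
proof -
  assume l: "l < n"
  have "Phi (mk b) l = (\<Sum>k<n. cf (\<pi> ^ k) l * b k)" by (simp add: mk_def Phi_tsum tp_in Phi_tp l)
  also have "\<dots> = (\<Sum>k<n. if k = l then b k else 0)" by (rule sum.cong) (auto simp: cf_pipow l)
  finally show ?thesis using l by simp
qed

lemma rep: "x \<in> tcarrier S \<Longrightarrow> x = mk (Phi x)"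
  by (rule Phi_inj) (auto simp: mk_in Phi_mk)

end

context main_loc
begin

abbreviation X :: "int \<Rightarrow> 'a tens set" where "X i \<equiv> Xfil S v i"

lemma ospan_in:
  assumes "x \<in> ospan S v G" "G \<subseteq> tcarrier S"
  shows "x \<in> tcarrier S"
  using assms by (induction rule: ospan.induct) (auto simp: tzero_in tadd_in tmul_in tp_in)

lemma ospanX_in: "x \<in> ospan S v (\<Union>j. {tp S a b |a b. a \<in> mpow v j \<and> b \<in> mpow v (i - j)}) \<Longrightarrow> x \<in> tcarrier S"
  by (erule ospan_in) (auto simp: tp_in)

lemma X_in: "x \<in> X i \<Longrightarrow> x \<in> tcarrier S"
  unfolding Xfil_def by (rule ospanX_in)

lemma X_gen: "a \<in> mpow v j \<Longrightarrow> b \<in> mpow v (i - j) \<Longrightarrow> tp S a b \<in> X i"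
  unfolding Xfil_def by (rule ospan.gen) blast

lemma X_zero: "tzero S \<in> X i" unfolding Xfil_def by (rule ospan.zero)
lemma X_add: "x \<in> X i \<Longrightarrow> y \<in> X i \<Longrightarrow> tadd S x y \<in> X i" unfolding Xfil_def by (rule ospan.add)
lemma X_smult: "c \<in> S \<Longrightarrow> c \<in> vring v \<Longrightarrow> x \<in> X i \<Longrightarrow> tmul S (tp S c 1) x \<in> X i"
  unfolding Xfil_def by (rule ospan.smult)

lemma X_Phi: "x \<in> X i \<Longrightarrow> l < n \<Longrightarrow> Phi x l \<in> mpow v (i - int l)"
  unfolding Xfil_def
proof (induction rule: ospan.induct)
  case zero then show ?case by (simp add: Phi_tzero)
next
  case (gen x)
  then obtain j a b where x: "x = tp S a b" "a \<in> mpow v j" "b \<in> mpow v (i - j)" by blast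
  have "cf a l * b \<in> mpow v ((j - int l) + (i - j))"
    by (rule mpow_mult[OF cf_mpow'[OF x(2) gen(2)] x(3)])
  then show ?case using gen x by (simp add: Phi_tp)
next
  case (add x y)
  then show ?case
    using ospanX_in[OF add(1)] ospanX_in[OF add(2)] by (auto simp: Phi_tadd tp_in intro!: mpow_add)
next
  case (smult c x)
  have "c * Phi x l \<in> mpow v (0 + (i - int l))"
    using smult by (intro mpow_mult) (auto simp: vring_iff)
  then show ?case using smult ospanX_in[OF smult(3)] by (auto simp: Phi_scalar tp_in)
qed

lemma tsum_X: "(\<And>k. k < m \<Longrightarrow> y k \<in> X i) \<Longrightarrow> tsum S y m \<in> X i"
  by (induction m) (auto simp: X_zero X_add)

lemma v_pipow_mpow: "\<pi> ^ l \<in> mpow v (int l)" by (simp add: mpow_def v_pipow)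

lemma mk_X: "(\<And>l. l < n \<Longrightarrow> b l \<in> mpow v (i - int l)) \<Longrightarrow> mk b \<in> X i"
  unfolding mk_def by (rule tsum_X) (auto intro: X_gen v_pipow_mpow)

lemma X_char: "x \<in> X i \<longleftrightarrow> x \<in> tcarrier S \<and> (\<forall>l<n. Phi x l \<in> mpow v (i - int l))"
proof
  assume "x \<in> X i" then show "x \<in> tcarrier S \<and> (\<forall>l<n. Phi x l \<in> mpow v (i - int l))"
    using X_in X_Phi by blast
next
  assume a: "x \<in> tcarrier S \<and> (\<forall>l<n. Phi x l \<in> mpow v (i - int l))"
  then have "x = mk (Phi x)" using rep by blast
  also have "\<dots> \<in> X i" using a by (intro mk_X) auto
  finally show "x \<in> X i" .
qed

lemma X_neg: "x \<in> X i \<Longrightarrow> tneg S x \<in> X i"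
  by (auto simp: X_char Phi_tneg tneg_in intro: mpow_neg)
lemma X_sub: "x \<in> X i \<Longrightarrow> y \<in> X i \<Longrightarrow> tsub S x y \<in> X i"
  by (simp add: tsub_def X_add X_neg)
lemma X_mono: "i \<le> j \<Longrightarrow> x \<in> X j \<Longrightarrow> x \<in> X i"
proof -
  assume a: "i \<le> j" "x \<in> X j"
  have "Phi x l \<in> mpow v (i - int l)" if "l < n" for l
    using a that by (intro mpow_mono[of "i - int l" "j - int l"]) (auto simp: X_char)
  then show ?thesis using a by (auto simp: X_char)
qed

lemma mul_gen:
  assumes a: "a \<in> mpow v j1" and b: "b \<in> mpow v (i - j1)" and y: "y \<in> X k"
  shows "tmul S (tp S a b) y \<in> X (i + k)"
  using y unfolding Xfil_def[of S v k]
proof (induction rule: ospan.induct)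
  case zero then show ?case by (simp add: tmul_zero tp_in X_zero)
next
  case (gen x)
  then obtain j2 a' b' where x: "x = tp S a' b'" "a' \<in> mpow v j2" "b' \<in> mpow v (k - j2)" by blast
  have "a * a' \<in> mpow v (j1 + j2)" using a x by (intro mpow_mult)
  moreover have "b * b' \<in> mpow v ((i + k) - (j1 + j2))"
    using mpow_mult[OF b x(3)] by (simp add: algebra_simps)
  ultimately show ?case using x by (simp add: tp_mul X_gen)
next
  case (add x y)
  then show ?case using ospanX_in[OF add(1)] ospanX_in[OF add(2)]
    by (simp add: tmul_add_right tp_in X_add)
next
  case (smult c x)
  have xin: "x \<in> tcarrier S" using ospanX_in[OF smult(3)] by (auto simp: tp_in)
  have "tmul S (tp S a b) (tmul S (tp S c 1) x) = tmul S (tp S c 1) (tmul S (tp S a b) x)"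
  proof -
    have "tmul S (tp S a b) (tmul S (tp S c 1) x) = tmul S (tmul S (tp S a b) (tp S c 1)) x"
      by (rule tmul_assoc[symmetric]) (auto simp: tp_in xin)
    also have "\<dots> = tmul S (tmul S (tp S c 1) (tp S a b)) x" by (simp add: tmul_comm[OF tp_in tp_in])
    also have "\<dots> = tmul S (tp S c 1) (tmul S (tp S a b) x)" by (rule tmul_assoc) (auto simp: tp_in xin)
    finally show ?thesis .
  qed
  then show ?case using smult by (simp add: X_smult)
qed

lemma X_mul:
  assumes x: "x \<in> X i" and y: "y \<in> X j"
  shows "tmul S x y \<in> X (i + j)"
  using x unfolding Xfil_def[of S v i]
proof (induction rule: ospan.induct)
  case zero then show ?case using X_in[OF y] by (simp add: tzero_mul X_zero)
next
  case (gen x)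
  then obtain j1 a b where x: "x = tp S a b" "a \<in> mpow v j1" "b \<in> mpow v (i - j1)" by blast
  then show ?case using mul_gen[OF x(2,3) y] by simp
next
  case (add x x')
  then show ?case using ospanX_in[OF add(1)] ospanX_in[OF add(2)] X_in[OF y]
    by (simp add: tmul_add_left tp_in X_add)
next
  case (smult c x)
  have xin: "x \<in> tcarrier S" using ospanX_in[OF smult(3)] by (auto simp: tp_in)
  have "tmul S (tmul S (tp S c 1) x) y = tmul S (tp S c 1) (tmul S x y)"
    using tmul_assoc[OF tp_in xin X_in[OF y]] .
  then show ?case using smult by (simp add: X_smult)
qed

lemma tone_X0: "tone S \<in> X 0"
  unfolding tone_def by (rule X_gen[of 1 0]) (simp_all add: mpow_def v_one)

lemma otens_char:
  assumes "y \<in> otens S v {a} (mpow v k)"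
  shows "\<exists>b\<in>mpow v k. y = tp S a b"
  using assms unfolding otens_def
proof (induction rule: ospan.induct)
  case zero then show ?case by (intro bexI[of _ 0]) (simp_all add: tp_zero_right)
next
  case (gen x) then show ?case by blast
next
  case (add x y)
  then obtain b b' where "b \<in> mpow v k" "x = tp S a b" "b' \<in> mpow v k" "y = tp S a b'" by blast
  then show ?case by (intro bexI[of _ "b + b'"]) (simp_all add: tp_add_right mpow_add)
next
  case (smult c x)
  then obtain b where b: "b \<in> mpow v k" "x = tp S a b" by blast
  have "tmul S (tp S c 1) x = tp S a (c * b)" using b smult by (simp add: tp_mul tp_scalar)
  moreover have "c * b \<in> mpow v (0 + k)" using smult b by (intro mpow_mult) (auto simp: vring_iff)
  ultimately show ?case by auto
qed

lemma otens_gen: "b \<in> mpow v k \<Longrightarrow> tp S a b \<in> otens S v {a} (mpow v k)"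
  unfolding otens_def by (rule ospan.gen) blast

lemma item3a: "X i = {tsum S y n | y. \<forall>l<n. y l \<in> otens S v {\<pi> ^ l} (mpow v (i - int l))}"
proof (intro set_eqI iffI)
  fix x assume x: "x \<in> X i"
  then have "x = mk (Phi x)" using rep X_in by blast
  moreover have "\<forall>l<n. tp S (\<pi> ^ l) (Phi x l) \<in> otens S v {\<pi> ^ l} (mpow v (i - int l))"
    using X_Phi[OF x] by (auto intro: otens_gen)
  ultimately show "x \<in> {tsum S y n | y. \<forall>l<n. y l \<in> otens S v {\<pi> ^ l} (mpow v (i - int l))}"
    unfolding mk_def by blast
next
  fix x assume "x \<in> {tsum S y n | y. \<forall>l<n. y l \<in> otens S v {\<pi> ^ l} (mpow v (i - int l))}"
  then obtain y where x: "x = tsum S y n" and y: "\<forall>l<n. y l \<in> otens S v {\<pi> ^ l} (mpow v (i - int l))"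
    by blast
  have "y l \<in> X i" if "l < n" for l
  proof -
    have yl: "y l \<in> otens S v {\<pi> ^ l} (mpow v (i - int l))" using y that by blast
    from otens_char[OF yl] obtain b where "b \<in> mpow v (i - int l)" "y l = tp S (\<pi> ^ l) b" by blast
    then show ?thesis using X_gen[OF v_pipow_mpow] by simp
  qed
  then show "x \<in> X i" unfolding x by (rule tsum_X)
qed

lemma item3b:
  assumes y: "\<forall>l<n. y l \<in> otens S v {\<pi> ^ l} (mpow v (i - int l))" and z: "tsum S y n = tzero S"
  shows "\<forall>l<n. y l = tzero S"
proof -
  have "\<forall>l\<in>{..<n}. \<exists>b. b \<in> mpow v (i - int l) \<and> y l = tp S (\<pi> ^ l) b"
    using otens_char y by blast
  from bchoice[OF this] obtain b where b0: "\<forall>l\<in>{..<n}. b l \<in> mpow v (i - int l) \<and> y l = tp S (\<pi> ^ l) (b l)"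
    by blast
  then have b: "\<forall>l<n. b l \<in> mpow v (i - int l) \<and> y l = tp S (\<pi> ^ l) (b l)" by simp
  have "tsum S y n = mk b" unfolding mk_def
  proof -
    have "\<forall>k\<le>n. tsum S y k = tsum S (\<lambda>l. tp S (\<pi> ^ l) (b l)) k"
    proof (intro allI impI)
      fix k show "k \<le> n \<Longrightarrow> tsum S y k = tsum S (\<lambda>l. tp S (\<pi> ^ l) (b l)) k"
        using b by (induction k) auto
    qed
    then show "tsum S y n = tsum S (\<lambda>l. tp S (\<pi> ^ l) (b l)) n" by simp
  qed
  then have "b l = 0" if "l < n" for l using Phi_mk[OF that, of b] z Phi_tzero[OF that] by simp
  then show ?thesis using b by (simp add: tp_zero_right)
qed

end

lemma smult_sum_right: "smult a (sum f A) = (\<Sum>x\<in>A. smult a (f x))"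
  by (induction A rule: infinite_finite_induct) (auto simp: smult_add_right)

lemma pcompose_monom: "pcompose (monom c k) q = smult c (q ^ k)"
  by (induction k) (auto simp: monom_0 monom_Suc pcompose_pCons)

lemma nat_mod_add:
  assumes "0 < n"
  shows "nat ((x + y) mod int n) = (nat (x mod int n) + nat (y mod int n)) mod n"
proof -
  have "int ((nat (x mod int n) + nat (y mod int n)) mod n) = (x mod int n + y mod int n) mod int n"
    using assms by (simp add: zmod_int)
  also have "\<dots> = (x + y) mod int n" by (simp add: mod_add_eq)
  finally show ?thesis by (metis nat_int)
qed

lemma nat_mod_neg:
  assumes "0 < n"
  shows "nat ((- x) mod int n) = ((n - 1) * nat (x mod int n)) mod n"
proof -
  have "int (((n - 1) * nat (x mod int n)) mod n) = (int (n - 1) * (x mod int n)) mod int n"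
    using assms by (simp add: zmod_int)
  also have "\<dots> = ((int n - 1) * (x mod int n)) mod int n" using assms by (simp add: of_nat_diff)
  also have "\<dots> = (int n * (x mod int n) - (x mod int n)) mod int n" by (simp add: algebra_simps)
  also have "\<dots> = (- (x mod int n)) mod int n" by (simp add: mod_diff_left_eq[symmetric])
  also have "\<dots> = (- x) mod int n" by (simp add: mod_minus_eq)
  finally show ?thesis by (metis nat_int)
qed

context main_loc
begin

definition fpol :: "'k poly" where "fpol = monom 1 n - 1"

lemma degree_fpol: "degree fpol = n"
proof (rule antisym)
  show "degree fpol \<le> n" unfolding fpol_def
    by (rule degree_diff_le) (auto simp: degree_monom_le)
  have "coeff fpol n \<noteq> 0" using n_pos by (simp add: fpol_def)
  then show "n \<le> degree fpol" by (rule le_degree)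
qed

lemma monom_small_mod: "k < n \<Longrightarrow> monom c k mod fpol = monom c k"
  by (rule mod_poly_less) (use degree_monom_le[of c k] degree_fpol in auto)

lemma deg_small_mod: "degree p < n \<Longrightarrow> p mod fpol = p"
  by (rule mod_poly_less) (simp add: degree_fpol)

lemma monom_mod: "monom c m mod fpol = monom c (m mod n)"
proof -
  define q where "q = m div n"
  have m: "m = m mod n + n * q" by (simp add: q_def)
  have "monom c m = monom c (m mod n) * (monom 1 n) ^ q"
    by (subst m) (simp add: monom_power mult_monom mult.commute add.commute)
  then have "monom c m - monom c (m mod n) = monom c (m mod n) * ((monom 1 n) ^ q - 1)"
    by (simp add: algebra_simps)
  also have "(monom 1 n) ^ q - 1 = fpol * (\<Sum>i<q. (monom 1 n) ^ i)"
    unfolding fpol_def by (rule power_diff_1_eq)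
  finally have "fpol dvd monom c m - monom c (m mod n)" by simp
  then have "monom c m mod fpol = monom c (m mod n) mod fpol" by (simp add: mod_eq_dvd_iff)
  also have "\<dots> = monom c (m mod n)" using n_pos by (intro monom_small_mod) simp
  finally show ?thesis .
qed

definition rX :: "'a tens \<Rightarrow> 'k poly" where
  "rX x = (\<Sum>l<n. monom (res (\<pi> ^ l * Phi x l)) l)"

lemma coeff_msum: "coeff (\<Sum>l<n. monom (c l) l) k = (if k < n then c k else 0)"
proof -
  have "coeff (\<Sum>l<n. monom (c l) l) k = (\<Sum>l<n. if l = k then c l else 0)"
    by (simp add: coeff_sum)
  then show ?thesis by simp
qed

lemma degree_msum: "degree (\<Sum>l<n. monom (c l) l) < n"
proof -
  have "degree (\<Sum>l<n. monom (c l) l) \<le> n - 1"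
    by (rule degree_le) (auto simp: coeff_msum)
  then show ?thesis using n_pos by simp
qed

lemma msum_eq_iff: "(\<Sum>l<n. monom (c l) l) = (\<Sum>l<n. monom (d l) l) \<longleftrightarrow> (\<forall>l<n. c l = d l)"
  by (auto simp: poly_eq_iff coeff_msum)

lemma msum_zero_iff: "(\<Sum>l<n. monom (c l) l) = 0 \<longleftrightarrow> (\<forall>l<n. c l = 0)"
  using msum_eq_iff[of c "\<lambda>_. 0"] by simp

lemma msum_single: "k < n \<Longrightarrow> (\<Sum>l<n. monom (if l = k then a else 0) l) = monom a k"
proof -
  assume k: "k < n"
  have "(\<Sum>l<n. monom (if l = k then a else 0) l) = (\<Sum>l<n. if l = k then monom a l else 0)"
    by (rule sum.cong) auto
  then show ?thesis using k by simp
qed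

lemma degree_rX: "degree (rX x) < n" unfolding rX_def by (rule degree_msum)

lemma pPhi_vring: "x \<in> X 0 \<Longrightarrow> l < n \<Longrightarrow> \<pi> ^ l * Phi x l \<in> vring v"
  using mpow_mult[OF v_pipow_mpow[of l] X_Phi[of x 0 l]] by (simp add: vring_iff)

lemma rX_add: "x \<in> X 0 \<Longrightarrow> y \<in> X 0 \<Longrightarrow> rX (tadd S x y) = rX x + rX y"
  unfolding rX_def
  by (auto simp: Phi_tadd X_in distrib_left res_add pPhi_vring add_monom sum.distrib[symmetric] intro!: sum.cong)

lemma rX_neg: "x \<in> X 0 \<Longrightarrow> rX (tneg S x) = - rX x"
  unfolding rX_def
  by (auto simp: Phi_tneg X_in res_neg pPhi_vring minus_monom sum_negf[symmetric] intro!: sum.cong)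

lemma rX_sub: "x \<in> X 0 \<Longrightarrow> y \<in> X 0 \<Longrightarrow> rX (tsub S x y) = rX x - rX y"
  by (simp add: tsub_def rX_add rX_neg X_neg)

lemma rX_zero: "rX (tzero S) = 0"
  by (simp add: rX_def Phi_tzero res_0)

lemma rX_scalar: "c \<in> S \<Longrightarrow> c \<in> vring v \<Longrightarrow> x \<in> X 0 \<Longrightarrow> rX (tmul S (tp S c 1) x) = smult (res c) (rX x)"
  unfolding rX_def
  by (auto simp: Phi_scalar X_in smult_sum_right smult_monom res_mult[symmetric] pPhi_vring mult.left_commute intro!: sum.cong)

lemma rX_kernel:
  assumes x: "x \<in> X 0"
  shows "rX x = 0 \<longleftrightarrow> x \<in> X 1"
proof -
  have "rX x = 0 \<longleftrightarrow> (\<forall>l<n. res (\<pi> ^ l * Phi x l) = 0)" unfolding rX_def by (rule msum_zero_iff)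
  also have "\<dots> \<longleftrightarrow> (\<forall>l<n. \<pi> ^ l * Phi x l \<in> mpow v 1)" using res_zero_iff pPhi_vring[OF x] by auto
  also have "\<dots> \<longleftrightarrow> (\<forall>l<n. Phi x l \<in> mpow v (1 - int l))"
  proof (intro all_cong1 imp_cong refl iffI)
    fix l assume "\<pi> ^ l * Phi x l \<in> mpow v 1"
    then have "\<pi> ^ l * Phi x l * inverse (\<pi> ^ l) \<in> mpow v (1 + - int l)"
      by (rule mpow_mult) (use v_inv[OF pipow_ne, of l] v_pipow[of l] in \<open>simp add: mpow_def\<close>)
    moreover have "\<pi> ^ l * Phi x l * inverse (\<pi> ^ l) = Phi x l" using pipow_ne[of l] by simp
    ultimately show "Phi x l \<in> mpow v (1 - int l)" by simp
  next
    fix l assume "Phi x l \<in> mpow v (1 - int l)"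
    from mpow_mult[OF v_pipow_mpow[of l] this] show "\<pi> ^ l * Phi x l \<in> mpow v 1" by simp
  qed
  also have "\<dots> \<longleftrightarrow> x \<in> X 1" using X_in[OF x] by (simp add: X_char)
  finally show ?thesis .
qed

lemma rX_eq_imp: "x \<in> X 0 \<Longrightarrow> y \<in> X 0 \<Longrightarrow> rX x = rX y \<Longrightarrow> tsub S x y \<in> X 1"
  using rX_kernel[of "tsub S x y"] by (simp add: rX_sub X_sub)

lemma rX_gen:
  assumes a: "a \<in> mpow v j" and b: "b \<in> mpow v (- j)"
  shows "rX (tp S a b) = monom (res (a * b)) (nat (v a mod int n))"
proof (cases "a = 0 \<or> b = 0")
  case True
  then show ?thesis by (auto simp: rX_def Phi_tp cf_zero res_0)
next
  case False
  then have a0: "a \<noteq> 0" and b0: "b \<noteq> 0" by auto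
  have vab: "0 \<le> v a + v b" using a b a0 b0 by (auto simp: mpow_def)
  let ?l0 = "nat (v a mod int n)"
  have l0: "?l0 < n" by (rule cf_val(1)[OF a0])
  have ab: "a * b \<in> vring v" using mpow_mult[OF a b] by (simp add: vring_iff)
  have key: "res (\<pi> ^ l * (cf a l * b)) = (if l = ?l0 then res (a * b) else 0)" if l: "l < n" for l
  proof -
    have e: "\<pi> ^ l * (cf a l * b) = cf a l * \<pi> ^ l * b" by (simp add: ac_simps)
    show ?thesis
    proof (cases "l = ?l0")
      case True
      have "- (a - cf a l * \<pi> ^ l) * b \<in> mpow v ((v a + 1) + v b)"
        using cf_lead[OF a0] True by (intro mpow_mult mpow_neg mpow_v) auto
      then have "- (a - cf a l * \<pi> ^ l) * b \<in> mpow v 1"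
        by (rule mpow_mono[rotated]) (use vab in auto)
      then have d: "cf a l * \<pi> ^ l * b - a * b \<in> mpow v 1" by (simp add: algebra_simps)
      have "cf a l * \<pi> ^ l * b \<in> vring v"
      proof -
        have "cf a l * \<pi> ^ l * b = (cf a l * \<pi> ^ l * b - a * b) + a * b" by simp
        also have "\<dots> \<in> mpow v 0" using mpow1_vring[OF d] ab by (intro mpow_add) (auto simp: vring_iff)
        finally show ?thesis by (simp add: vring_iff)
      qed
      then show ?thesis using res_eq[OF _ ab d] True unfolding e by simp
    next
      case False
      have "cf a l * \<pi> ^ l * b \<in> mpow v ((v a + 1) + v b)"
        by (rule mpow_mult[OF cf_val(5)[OF a0 l False] mpow_v])
      then have "cf a l * \<pi> ^ l * b \<in> mpow v 1"
        by (rule mpow_mono[rotated]) (use vab in auto)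
      then show ?thesis using res_zero_iff[OF mpow1_vring] False unfolding e by simp
    qed
  qed
  have "rX (tp S a b) = (\<Sum>l<n. monom (if l = ?l0 then res (a * b) else 0) l)"
    unfolding rX_def using key by (auto simp: Phi_tp intro!: sum.cong)
  also have "\<dots> = monom (res (a * b)) ?l0" by (rule msum_single[OF l0])
  finally show ?thesis .
qed

lemma rX_tone: "rX (tone S) = 1"
  using rX_gen[of 1 0 1] by (simp add: tone_def mpow_def v_one res_one monom_0 one_pCons)

lemma rX_mul_gen:
  assumes a: "a \<in> mpow v j1" and b: "b \<in> mpow v (- j1)" and a': "a' \<in> mpow v j2" and b': "b' \<in> mpow v (- j2)"
  shows "rX (tp S (a * a') (b * b')) = (rX (tp S a b) * rX (tp S a' b')) mod fpol"
proof -
  have aa': "a * a' \<in> mpow v (j1 + j2)" by (rule mpow_mult[OF a a'])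
  have bb': "b * b' \<in> mpow v (- (j1 + j2))" using mpow_mult[OF b b'] by simp
  have ab: "a * b \<in> vring v" "a' * b' \<in> vring v"
    using mpow_mult[OF a b] mpow_mult[OF a' b'] by (simp_all add: vring_iff)
  have r: "res (a * a' * (b * b')) = res (a * b) * res (a' * b')"
    using res_mult[OF ab] by (simp add: ac_simps)
  show ?thesis
  proof (cases "a = 0 \<or> a' = 0")
    case True
    then show ?thesis using rX_gen[OF aa' bb'] rX_gen[OF a b] rX_gen[OF a' b'] by (auto simp: res_0)
  next
    case False
    then have "v (a * a') = v a + v a'" by (simp add: v_mult)
    then have "nat (v (a * a') mod int n) = (nat (v a mod int n) + nat (v a' mod int n)) mod n"
      using nat_mod_add[OF n_pos] by simp
    then show ?thesis
      using rX_gen[OF aa' bb'] rX_gen[OF a b] rX_gen[OF a' b'] r by (simp add: mult_monom monom_mod)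
  qed
qed

lemma X0_def': "X 0 = ospan S v (\<Union>j. {tp S a b |a b. a \<in> mpow v j \<and> b \<in> mpow v (- j)})"
  by (simp add: Xfil_def)

lemma X0_mul: "x \<in> X 0 \<Longrightarrow> y \<in> X 0 \<Longrightarrow> tmul S x y \<in> X 0"
  using X_mul[of x 0 y 0] by simp

lemma rX_mul_left:
  assumes a: "a \<in> mpow v j1" and b: "b \<in> mpow v (- j1)" and y: "y \<in> X 0"
  shows "rX (tmul S (tp S a b) y) = (rX (tp S a b) * rX y) mod fpol"
  using y unfolding X0_def'
proof (induction rule: ospan.induct)
  case zero then show ?case by (simp add: tmul_zero tp_in rX_zero)
next
  case (gen x)
  then obtain j2 a' b' where x: "x = tp S a' b'" "a' \<in> mpow v j2" "b' \<in> mpow v (- j2)" by blast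
  then show ?case using rX_mul_gen[OF a b x(2,3)] by (simp add: tp_mul)
next
  case (add x y)
  have xy: "x \<in> X 0" "y \<in> X 0" using add(1,2) by (simp_all add: X0_def')
  have g: "tp S a b \<in> X 0" using X_gen[of a j1 b 0] a b by simp
  show ?case using add xy X_in[OF xy(1)] X_in[OF xy(2)]
    by (simp add: tmul_add_right tp_in rX_add X0_mul[OF g] distrib_left poly_mod_add_left)
next
  case (smult c x)
  have x: "x \<in> X 0" using smult(3) by (simp add: X0_def')
  have g: "tp S a b \<in> X 0" using X_gen[of a j1 b 0] a b by simp
  have xin: "x \<in> tcarrier S" using X_in[OF x] .
  have "tmul S (tp S a b) (tmul S (tp S c 1) x) = tmul S (tp S c 1) (tmul S (tp S a b) x)"
  proof -
    have "tmul S (tp S a b) (tmul S (tp S c 1) x) = tmul S (tmul S (tp S a b) (tp S c 1)) x"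
      by (rule tmul_assoc[symmetric]) (auto simp: tp_in xin)
    also have "\<dots> = tmul S (tmul S (tp S c 1) (tp S a b)) x" by (simp add: tmul_comm[OF tp_in tp_in])
    also have "\<dots> = tmul S (tp S c 1) (tmul S (tp S a b) x)" by (rule tmul_assoc) (auto simp: tp_in xin)
    finally show ?thesis .
  qed
  then show ?case using smult x
    by (simp add: rX_scalar X0_mul[OF g] mod_smult_left)
qed

lemma rX_mul:
  assumes x: "x \<in> X 0" and y: "y \<in> X 0"
  shows "rX (tmul S x y) = (rX x * rX y) mod fpol"
  using x unfolding X0_def'
proof (induction rule: ospan.induct)
  case zero then show ?case using X_in[OF y] by (simp add: tzero_mul rX_zero)
next
  case (gen x)
  then obtain j1 a b where x: "x = tp S a b" "a \<in> mpow v j1" "b \<in> mpow v (- j1)" by blast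
  then show ?case using rX_mul_left[OF x(2,3) y] by simp
next
  case (add x x')
  have xx: "x \<in> X 0" "x' \<in> X 0" using add(1,2) by (simp_all add: X0_def')
  show ?case using add xx X_in[OF xx(1)] X_in[OF xx(2)] X_in[OF y]
    by (simp add: tmul_add_left rX_add X0_mul[OF _ y] distrib_right poly_mod_add_left)
next
  case (smult c x)
  have xx: "x \<in> X 0" using smult(3) by (simp add: X0_def')
  have "tmul S (tmul S (tp S c 1) x) y = tmul S (tp S c 1) (tmul S x y)"
    by (rule tmul_assoc) (auto simp: tp_in X_in[OF xx] X_in[OF y])
  then show ?case using smult xx
    by (simp add: rX_scalar X0_mul[OF _ y] mod_smult_left)
qed

end

context main_loc
begin

lemma tp_c1_swap: "c \<in> S \<Longrightarrow> tp S 1 c = tp S c 1"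
  using tp_scalar[of c 1 1] by simp

lemma tswap_X: "x \<in> X i \<Longrightarrow> tswap S x \<in> X i"
  unfolding Xfil_def[of S v i]
proof (induction rule: ospan.induct)
  case zero then show ?case using X_zero by (simp add: tswap_zero Xfil_def)
next
  case (gen x)
  then obtain j a b where x: "x = tp S a b" "a \<in> mpow v j" "b \<in> mpow v (i - j)" by blast
  have "tp S b a \<in> X i" by (rule X_gen[of b "i - j"]) (use x in auto)
  then show ?case using x by (simp add: tswap_tp Xfil_def)
next
  case (add x y)
  then show ?case using ospanX_in[OF add(1)] ospanX_in[OF add(2)] X_add[of _ i]
    by (simp add: tswap_add Xfil_def)
next
  case (smult c x)
  have "tswap S (tmul S (tp S c 1) x) = tmul S (tp S c 1) (tswap S x)"
    using smult ospanX_in[OF smult(3)] by (simp add: tswap_mul tp_in tswap_tp tp_c1_swap)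
  then show ?case using ospan.smult[OF smult(1,2) smult(4)] by simp
qed

lemma tswap_image: "tswap S ` X i = X i"
proof
  show "tswap S ` X i \<subseteq> X i" using tswap_X by blast
  show "X i \<subseteq> tswap S ` X i"
  proof
    fix x assume x: "x \<in> X i"
    then have "x = tswap S (tswap S x)" using tswap_tswap[OF X_in[OF x]] by simp
    then show "x \<in> tswap S ` X i" using tswap_X[OF x] by blast
  qed
qed

lemma tswap_bij: "bij_betw (tswap S) (tcarrier S) (tcarrier S)"
proof (rule bij_betw_imageI)
  show "inj_on (tswap S) (tcarrier S)"
    by (rule inj_onI) (metis tswap_tswap)
  show "tswap S ` tcarrier S = tcarrier S"
  proof
    show "tswap S ` tcarrier S \<subseteq> tcarrier S" using tswap_in by blast
    show "tcarrier S \<subseteq> tswap S ` tcarrier S"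
    proof
      fix x assume x: "x \<in> tcarrier S"
      then have "x = tswap S (tswap S x)" using tswap_tswap by simp
      then show "x \<in> tswap S ` tcarrier S" using tswap_in[OF x] by blast
    qed
  qed
qed

lemma rX_swap:
  assumes x: "x \<in> X 0"
  shows "rX (tswap S x) = pcompose (rX x) (monom 1 (n - 1)) mod fpol"
  using x unfolding X0_def'
proof (induction rule: ospan.induct)
  case zero then show ?case by (simp add: tswap_zero rX_zero)
next
  case (gen x)
  then obtain j a b where x: "x = tp S a b" "a \<in> mpow v j" "b \<in> mpow v (- j)" by blast
  have ba: "b \<in> mpow v (- j)" "a \<in> mpow v (- (- j))" using x by auto
  have l: "rX (tswap S x) = monom (res (a * b)) (nat (v b mod int n))"
    using rX_gen[OF ba] x by (simp add: tswap_tp mult.commute)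
  have r: "pcompose (rX x) (monom 1 (n - 1)) mod fpol = monom (res (a * b)) (((n - 1) * nat (v a mod int n)) mod n)"
    using rX_gen[OF x(2,3)] x by (simp add: pcompose_monom monom_power smult_monom monom_mod mult.commute)
  show ?case
  proof (cases "res (a * b) = 0")
    case True then show ?thesis using l r by simp
  next
    case False
    have ab: "a * b \<in> vring v" using mpow_mult[OF x(2,3)] by (simp add: vring_iff)
    then have ab1: "a * b \<notin> mpow v 1" using False res_zero_iff by blast
    then have a0: "a \<noteq> 0" "b \<noteq> 0" by auto
    have "v (a * b) = 0" using ab ab1 a0 by (auto simp: vring_iff mpow_def)
    then have "v b = - v a" using a0 by (simp add: v_mult)
    then show ?thesis using l r nat_mod_neg[OF n_pos, of "v a"] by simp
  qed
next
  case (add x y)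
  have xy: "x \<in> X 0" "y \<in> X 0" using add(1,2) by (simp_all add: X0_def')
  show ?case using add xy X_in[OF xy(1)] X_in[OF xy(2)]
    by (simp add: tswap_add rX_add tswap_X pcompose_add poly_mod_add_left)
next
  case (smult c x)
  have xx: "x \<in> X 0" using smult(3) by (simp add: X0_def')
  have "tswap S (tmul S (tp S c 1) x) = tmul S (tp S c 1) (tswap S x)"
    using smult X_in[OF xx] by (simp add: tswap_mul tp_in tswap_tp tp_c1_swap)
  then show ?case using smult xx
    by (simp add: rX_scalar tswap_X pcompose_smult mod_smult_left)
qed

lemma tpow_tp: "tpow S (tp S a b) k = tp S (a ^ k) (b ^ k)"
  by (induction k) (auto simp: tone_def tp_mul mult.commute)

definition Tpi :: "'a tens" where "Tpi = tp S \<pi> (inverse \<pi>)"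

lemma tinv_Tpi: "tinv S Tpi = tp S (inverse \<pi>) \<pi>"
proof -
  let ?T' = "tp S (inverse \<pi>) \<pi>"
  have T'ok: "?T' \<in> tcarrier S \<and> tmul S Tpi ?T' = tone S"
    using pi0 by (simp add: Tpi_def tp_in tp_mul tone_def mult.commute)
  have uniq: "y = ?T'" if "y \<in> tcarrier S \<and> tmul S Tpi y = tone S" for y
  proof -
    have "y = tmul S (tone S) y" using that by (simp add: tone_mul)
    also have "\<dots> = tmul S (tmul S ?T' Tpi) y" using T'ok by (simp add: tmul_comm Tpi_def tp_in)
    also have "\<dots> = tmul S ?T' (tmul S Tpi y)" using that by (simp add: tmul_assoc Tpi_def tp_in)
    also have "\<dots> = ?T'" using that by (simp add: tmul_one tp_in)
    finally show ?thesis .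
  qed
  show ?thesis unfolding tinv_def using T'ok uniq by (rule some_equality)
qed

lemma tpowi_Tpi: "\<exists>a. a \<noteq> 0 \<and> v a = k \<and> tpowi S Tpi k = tp S a (inverse a)"
proof (cases "0 \<le> k")
  case True
  then have "tpowi S Tpi k = tp S (\<pi> ^ nat k) (inverse (\<pi> ^ nat k))"
    by (simp add: tpowi_def Tpi_def tpow_tp power_inverse)
  then show ?thesis using True pi0 v_pipow[of "nat k"] by (intro exI[of _ "\<pi> ^ nat k"]) simp
next
  case False
  then have "tpowi S Tpi k = tp S (inverse (\<pi> ^ nat (- k))) (inverse (inverse (\<pi> ^ nat (- k))))"
    by (simp add: tpowi_def tinv_Tpi tpow_tp power_inverse)
  moreover have "v (inverse (\<pi> ^ nat (- k))) = k" using False v_inv[OF pipow_ne] v_pipow by simp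
  ultimately show ?thesis using pi0 by (intro exI[of _ "inverse (\<pi> ^ nat (- k))"]) simp
qed

lemma unit_gen: "a \<noteq> 0 \<Longrightarrow> tp S a (inverse a) \<in> X 0"
  by (rule X_gen[of a "v a"]) (auto simp: mpow_def v_inv)

lemma rX_unit: "a \<noteq> 0 \<Longrightarrow> rX (tp S a (inverse a)) = monom 1 (nat (v a mod int n))"
  using rX_gen[of a "v a" "inverse a"] by (simp add: mpow_def v_inv res_one)

lemma rX_Selem: "a \<in> S \<Longrightarrow> a \<in> vring v \<Longrightarrow> rX (tp S a 1) = [:res a:]"
proof -
  assume a: "a \<in> S" "a \<in> vring v"
  have "rX (tp S a 1) = monom (res a) (nat (v a mod int n))"
    using rX_gen[of a 0 1] a by (simp add: vring_iff mpow_def v_one)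
  moreover have "a \<noteq> 0 \<Longrightarrow> v a mod int n = 0" using vS[OF a(1)] by simp
  ultimately show ?thesis by (cases "a = 0") (simp_all add: res_0 monom_0)
qed

lemma is_rX_any:
  assumes p: "p \<noteq> 0" "v p = 1"
  shows "is_rX S v res n p rX"
  unfolding is_rX_def Let_def fpol_def[symmetric]
proof (intro conjI ballI allI impI)
  show "degree (rX a) < n" for a by (rule degree_rX)
  show "rX (tadd S a b) = rX a + rX b" if "a \<in> X 0" "b \<in> X 0" for a b using that by (rule rX_add)
  show "rX (tmul S a b) = rX a * rX b mod fpol" if "a \<in> X 0" "b \<in> X 0" for a b using that by (rule rX_mul)
  show "rX (tone S) = 1 mod fpol" using deg_small_mod[of 1] n_pos by (simp add: rX_tone)
  show "rX (tp S a 1) = [:res a:] mod fpol" if "a \<in> S \<inter> vring v" for a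
    using that deg_small_mod[of "[:res a:]"] n_pos by (simp add: rX_Selem)
  show "(rX a = 0) = (a \<in> X 1)" if "a \<in> X 0" for a using that by (rule rX_kernel)
  show "\<exists>\<alpha>\<in>X 0. rX \<alpha> = q" if "degree q < n" for q
  proof -
    have "\<forall>l\<in>{..<n}. \<exists>u. u \<in> vring v \<and> res u = coeff q l" using res_surj by blast
    from bchoice[OF this] obtain u where u: "\<forall>l\<in>{..<n}. u l \<in> vring v \<and> res (u l) = coeff q l" by blast
    define b where "b l = inverse (\<pi> ^ l) * u l" for l
    have bm: "b l \<in> mpow v (0 - int l)" if "l < n" for l
    proof -
      have "inverse (\<pi> ^ l) * u l \<in> mpow v (- int l + 0)"
        by (rule mpow_mult) (use u that v_inv[OF pipow_ne, of l] v_pipow[of l] in \<open>auto simp: mpow_def vring_iff\<close>)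
      then show ?thesis by (simp add: b_def)
    qed
    have "mk b \<in> X 0" by (rule mk_X) (use bm in auto)
    moreover have "rX (mk b) = (\<Sum>l<n. monom (coeff q l) l)"
    proof -
      have pc: "\<pi> ^ l * (inverse (\<pi> ^ l) * w) = w" for l w
        using pipow_ne[of l] by (simp add: mult.assoc[symmetric])
      show ?thesis unfolding rX_def using u by (auto simp: Phi_mk b_def pc intro!: sum.cong)
    qed
    moreover have "(\<Sum>l<n. monom (coeff q l) l) = q"
      using that by (auto simp: poly_eq_iff coeff_msum coeff_eq_0)
    ultimately show ?thesis by auto
  qed
  show "rX (tp S p (inverse p)) = [:0, 1:] mod fpol"
  proof -
    have e1: "[:0, 1:] = (monom 1 1 :: 'k poly)" by (simp add: monom_Suc monom_0 one_pCons)
    have e2: "nat (1 mod int n) = 1 mod n" by (metis nat_int of_nat_1 zmod_int)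
    show ?thesis using rX_unit[OF p(1)] p(2) by (simp add: e1 e2 monom_mod)
  qed
qed

lemma rX_unique:
  assumes r': "is_rX S v res n \<pi> r'" and x: "x \<in> X 0"
  shows "r' x = rX x"
proof -
  note R = r'[unfolded is_rX_def Let_def fpol_def[symmetric]]
  have deg: "\<And>a. a \<in> X 0 \<Longrightarrow> degree (r' a) < n" using R by blast
  have radd: "\<And>a b. a \<in> X 0 \<Longrightarrow> b \<in> X 0 \<Longrightarrow> r' (tadd S a b) = r' a + r' b" using R by blast
  have rmul: "\<And>a b. a \<in> X 0 \<Longrightarrow> b \<in> X 0 \<Longrightarrow> r' (tmul S a b) = r' a * r' b mod fpol" using R by blast
  have rone: "r' (tone S) = 1 mod fpol" using R by blast
  have rS: "\<And>a. a \<in> S \<Longrightarrow> a \<in> vring v \<Longrightarrow> r' (tp S a 1) = [:res a:] mod fpol" using R by blast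
  have rker: "\<And>a. a \<in> X 0 \<Longrightarrow> r' a = 0 \<longleftrightarrow> a \<in> X 1" using R by blast
  have rT: "r' Tpi = [:0, 1:] mod fpol" using R by (simp add: Tpi_def)
  have r0: "r' (tzero S) = 0"
  proof -
    have "r' (tzero S) = r' (tzero S) + r' (tzero S)"
      using radd[OF X_zero X_zero] by (simp add: tadd_zero tzero_in)
    then show ?thesis by (metis add_cancel_right_right)
  qed
  have rsub: "r' a = r' b" if "a \<in> X 0" "b \<in> X 0" "tsub S a b \<in> X 1" for a b
  proof -
    have "tadd S (tsub S a b) b = a"
      using X_in[OF that(1)] X_in[OF that(2)]
      by (simp add: tsub_def tadd_assoc tneg_in tadd_comm[of "tneg S b" b] tadd_neg tadd_zero)
    then have "r' a = r' (tsub S a b) + r' b" using radd[OF X_sub[OF that(1,2)] that(2)] by simp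
    then show ?thesis using rker[OF X_sub[OF that(1,2)]] that(3) by simp
  qed
  have rsc: "r' (tmul S (tp S c 1) y) = smult (res c) (r' y)" if "c \<in> S" "c \<in> vring v" "y \<in> X 0" for c y
  proof -
    have c0: "tp S c 1 \<in> X 0" using X_gen[of c 0 1 0] that by (simp add: vring_iff mpow_def v_one)
    have "r' (tmul S (tp S c 1) y) = ([:res c:] mod fpol * r' y) mod fpol" using rmul[OF c0 that(3)] rS[OF that(1,2)] by simp
    also have "\<dots> = smult (res c) (r' y)"
      using deg_small_mod[of "[:res c:]"] deg_small_mod[OF deg[OF that(3)]] n_pos by (simp add: mod_smult_left)
    finally show ?thesis .
  qed
  have Tpow: "tpow S Tpi k = tp S (\<pi> ^ k) (inverse (\<pi> ^ k))" for k
    by (simp add: Tpi_def tpow_tp power_inverse)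
  have Tpow0: "tpow S Tpi k \<in> X 0" for k using unit_gen[OF pipow_ne] Tpow by simp
  have rTpow: "r' (tpow S Tpi k) = monom 1 k mod fpol" for k
  proof (induction k)
    case 0 then show ?case using rone by (simp add: monom_0 one_pCons)
  next
    case (Suc k)
    have "r' (tpow S Tpi (Suc k)) = r' (tpow S Tpi k) * r' Tpi mod fpol"
      using rmul[OF Tpow0 unit_gen[OF pi0]] by (simp add: Tpi_def)
    also have "\<dots> = (monom 1 k mod fpol) * ([:0, 1:] mod fpol) mod fpol" using Suc rT by simp
    also have "\<dots> = (monom 1 k * [:0, 1:]) mod fpol" by (simp add: mod_mult_eq)
    also have "monom 1 k * [:0, 1:] = (monom 1 (Suc k) :: 'k poly)"
      by (simp add: monom_Suc monom_0 mult.commute[of "monom 1 k"] pCons_one)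
    finally show ?case .
  qed
  show ?thesis
    using x unfolding X0_def'
  proof (induction rule: ospan.induct)
    case zero then show ?case by (simp add: r0 rX_zero)
  next
    case (gen y)
    then obtain j a b where y: "y = tp S a b" "a \<in> mpow v j" "b \<in> mpow v (- j)" by blast
    have y0: "y \<in> X 0" using y X_gen[of a j b 0] by simp
    have ab: "a * b \<in> vring v" using mpow_mult[OF y(2,3)] by (simp add: vring_iff)
    obtain s where s: "s \<in> S" "s \<in> vring v" "res s = res (a * b)" using res_lift[OF ab] by blast
    let ?k = "nat (v a mod int n)"
    have k: "?k < n" using n_pos by (simp add: nat_less_iff)
    define \<gamma> where "\<gamma> = tmul S (tp S s 1) (tpow S Tpi ?k)"
    have \<gamma>e: "\<gamma> = tp S (s * \<pi> ^ ?k) (inverse (\<pi> ^ ?k))" by (simp add: \<gamma>_def Tpow tp_mul)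
    have s0: "tp S s 1 \<in> X 0" using X_gen[of s 0 1 0] s by (simp add: vring_iff mpow_def v_one)
    have \<gamma>0: "\<gamma> \<in> X 0" unfolding \<gamma>_def by (rule X0_mul[OF s0 Tpow0])
    have rXy: "rX y = monom (res s) ?k" using rX_gen[OF y(2,3)] y s by simp
    have rX\<gamma>: "rX \<gamma> = monom (res s) ?k"
    proof (cases "s = 0")
      case True then show ?thesis by (simp add: \<gamma>e tp_zero_left rX_zero res_0)
    next
      case False
      have sm: "s * \<pi> ^ ?k \<in> mpow v (int ?k)" "inverse (\<pi> ^ ?k) \<in> mpow v (- int ?k)"
        using s(2) mpow_mult[OF _ v_pipow_mpow[of ?k], of s 0] v_inv[OF pipow_ne, of ?k] v_pipow[of ?k]
        by (auto simp: vring_iff mpow_def)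
      have "v (s * \<pi> ^ ?k) = v s + int ?k" using v_mult[OF False pipow_ne[of ?k]] v_pipow[of ?k] by simp
      moreover obtain z where "v s = int n * z" using vS[OF s(1) False] by (auto elim: dvdE)
      ultimately have kk: "nat (v (s * \<pi> ^ ?k) mod int n) = ?k" using k by simp
      have si: "s * \<pi> ^ ?k * inverse (\<pi> ^ ?k) = s" using pipow_ne[of ?k] by (simp add: mult.assoc)
      have "rX \<gamma> = monom (res (s * \<pi> ^ ?k * inverse (\<pi> ^ ?k))) (nat (v (s * \<pi> ^ ?k) mod int n))"
        unfolding \<gamma>e by (rule rX_gen[OF sm])
      also have "\<dots> = monom (res s) ?k" by (simp only: si kk)
      finally show ?thesis .
    qed
    have "r' y = r' \<gamma>" by (rule rsub[OF y0 \<gamma>0 rX_eq_imp[OF y0 \<gamma>0]]) (simp add: rXy rX\<gamma>)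
    also have "r' \<gamma> = smult (res s) (r' (tpow S Tpi ?k))" unfolding \<gamma>_def by (rule rsc[OF s(1,2) Tpow0])
    also have "\<dots> = monom (res s) ?k" using k by (simp add: rTpow monom_small_mod smult_monom)
    finally show ?case using rXy by simp
  next
    case (add a b)
    have ab: "a \<in> X 0" "b \<in> X 0" using add(1,2) by (simp_all add: X0_def')
    then show ?case using add by (simp add: radd rX_add)
  next
    case (smult c a)
    have a: "a \<in> X 0" using smult(3) by (simp add: X0_def')
    then show ?case using smult by (simp add: rsc rX_scalar)
  qed
qed

end

theorem proposition2p2p1:
  fixes S :: "'a::field set" and v :: "'a \<Rightarrow> int" and n :: nat and \<pi> :: 'a
    and res :: "'a \<Rightarrow> 'k::field" and i j :: int
  assumes ext: "totally_ramified_cdvf S v n"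
    and unif: "\<pi> \<noteq> 0" "v \<pi> = 1"
    and res: "residue_map v res"
  shows
    \<comment> \<open>1.\<close>
    "(\<forall>x\<in>Xfil S v i. \<forall>y\<in>Xfil S v j. tmul S x y \<in> Xfil S v (i + j))
     \<and> (tone S \<in> Xfil S v 0 \<and> tzero S \<in> Xfil S v 0
        \<and> (\<forall>x\<in>Xfil S v 0. \<forall>y\<in>Xfil S v 0. tadd S x y \<in> Xfil S v 0 \<and> tmul S x y \<in> Xfil S v 0)
        \<and> (\<forall>x\<in>Xfil S v 0. tneg S x \<in> Xfil S v 0))
     \<and> (\<forall>a\<in>Xfil S v 0. \<forall>x\<in>Xfil S v i. tmul S a x \<in> Xfil S v i)
     \<and> (\<forall>x\<in>Xfil S v i. \<forall>y\<in>Xfil S v i. tadd S x y \<in> Xfil S v i)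
    \<comment> \<open>2.\<close>
     \<and> (\<exists>e\<in>Xfil S v i.
          (\<forall>x\<in>Xfil S v i. \<exists>a\<in>Xfil S v 0. tsub S x (tmul S a e) \<in> Xfil S v (i + 1))
        \<and> (\<forall>a\<in>Xfil S v 0. tmul S a e \<in> Xfil S v (i + 1) \<longrightarrow> a \<in> Xfil S v 1))
    \<comment> \<open>3.\<close>
     \<and> Xfil S v i = {tsum S y n | y. \<forall>l<n. y l \<in> otens S v {\<pi> ^ l} (mpow v (i - int l))}
     \<and> (\<forall>y. (\<forall>l<n. y l \<in> otens S v {\<pi> ^ l} (mpow v (i - int l))) \<longrightarrow> tsum S y n = tzero S
            \<longrightarrow> (\<forall>l<n. y l = tzero S))
    \<comment> \<open>4.\<close>
     \<and> (\<forall>\<epsilon>\<in>vunits v. tsub S (tp S \<epsilon> (inverse \<epsilon>)) (tone S) \<in> Xfil S v 1)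
     \<and> (\<forall>x. x \<noteq> 0 \<longrightarrow> (\<forall>\<epsilon>1\<in>vunits v. \<forall>\<epsilon>2\<in>vunits v.
           tsub S (tp S (\<epsilon>1 * x) (\<epsilon>2 * inverse x))
                  (tmul S (tp S (\<epsilon>1 * \<epsilon>2) 1) (tpowi S (tp S \<pi> (inverse \<pi>)) (v x)))
             \<in> Xfil S v 1))
     \<and> (\<forall>x. x \<noteq> 0 \<longrightarrow> int n dvd v x \<longrightarrow> tsub S (tp S x (inverse x)) (tone S) \<in> Xfil S v 1)
    \<comment> \<open>5. and 6.\<close>
     \<and> (\<forall>\<pi>1 \<pi>2. \<pi>1 \<noteq> 0 \<longrightarrow> v \<pi>1 = 1 \<longrightarrow> \<pi>2 \<noteq> 0 \<longrightarrow> v \<pi>2 = 1 \<longrightarrow>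
           tsub S (tp S \<pi>1 (inverse \<pi>1)) (tp S \<pi>2 (inverse \<pi>2)) \<in> Xfil S v 1)
     \<and> bij_betw (tswap S) (tcarrier S) (tcarrier S)
     \<and> (\<forall>x\<in>tcarrier S. \<forall>y\<in>tcarrier S.
           tswap S (tadd S x y) = tadd S (tswap S x) (tswap S y)
         \<and> tswap S (tmul S x y) = tmul S (tswap S x) (tswap S y))
     \<and> tswap S (tone S) = tone S
     \<and> (\<forall>k. tswap S ` Xfil S v k = Xfil S v k)
     \<and> (\<exists>r. is_rX S v res n \<pi> r
          \<and> (\<forall>r'. is_rX S v res n \<pi> r' \<longrightarrow> (\<forall>\<alpha>\<in>Xfil S v 0. r' \<alpha> = r \<alpha>))
          \<and> (\<forall>\<pi>'. \<pi>' \<noteq> 0 \<longrightarrow> v \<pi>' = 1 \<longrightarrow> is_rX S v res n \<pi>' r)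
          \<and> (\<forall>\<alpha>\<in>Xfil S v 0. r (tswap S \<alpha>) = pcompose (r \<alpha>) (monom 1 (n - 1)) mod (monom 1 n - 1)))"
proof -
  have S: "subfield S" and dv: "discrete_valuation v" and ed: "ext_degree S n"
    and vals: "{v x | x. x \<in> S \<and> x \<noteq> 0} = {int n * z | z. True}"
    using ext unfolding totally_ramified_cdvf_def by auto
  interpret M: main_loc S v n \<pi> res
    by unfold_locales (use S dv ed vals unif res in auto)
  have one0: "monom 1 0 = (1 :: 'k poly)" by (simp add: monom_0 one_pCons)
  have p1: "\<forall>x\<in>Xfil S v i. \<forall>y\<in>Xfil S v j. tmul S x y \<in> Xfil S v (i + j)"
    using M.X_mul by blast
  have p2: "tone S \<in> Xfil S v 0 \<and> tzero S \<in> Xfil S v 0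
        \<and> (\<forall>x\<in>Xfil S v 0. \<forall>y\<in>Xfil S v 0. tadd S x y \<in> Xfil S v 0 \<and> tmul S x y \<in> Xfil S v 0)
        \<and> (\<forall>x\<in>Xfil S v 0. tneg S x \<in> Xfil S v 0)"
    using M.tone_X0 M.X_zero M.X_add M.X0_mul M.X_neg by blast
  have p3: "\<forall>a\<in>Xfil S v 0. \<forall>x\<in>Xfil S v i. tmul S a x \<in> Xfil S v i"
    using M.X_mul[of _ 0 _ i] by simp
  have p4: "\<forall>x\<in>Xfil S v i. \<forall>y\<in>Xfil S v i. tadd S x y \<in> Xfil S v i"
    using M.X_add by blast
  have p5: "\<exists>e\<in>Xfil S v i.
          (\<forall>x\<in>Xfil S v i. \<exists>a\<in>Xfil S v 0. tsub S x (tmul S a e) \<in> Xfil S v (i + 1))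
        \<and> (\<forall>a\<in>Xfil S v 0. tmul S a e \<in> Xfil S v (i + 1) \<longrightarrow> a \<in> Xfil S v 1)"
  proof -
    obtain a where a: "a \<noteq> 0" "v a = i" using M.v_surj by blast
    let ?e = "tp S a 1" and ?e' = "tp S (inverse a) 1"
    have e: "?e \<in> Xfil S v i" using M.X_gen[of a i 1 i] a by (simp add: mpow_def M.v_one)
    have e': "?e' \<in> Xfil S v (- i)" using M.X_gen[of "inverse a" "- i" 1 "- i"] a
      by (simp add: mpow_def M.v_one M.v_inv)
    have ee: "tmul S ?e' ?e = tone S" "tmul S ?e ?e' = tone S"
      using a by (simp_all add: M.tp_mul tone_def)
    have c1: "\<exists>b\<in>Xfil S v 0. tsub S x (tmul S b ?e) \<in> Xfil S v (i + 1)" if x: "x \<in> Xfil S v i" for x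
    proof -
      have b0: "tmul S x ?e' \<in> Xfil S v 0" using M.X_mul[OF x e'] by simp
      have "tmul S (tmul S x ?e') ?e = x"
        using M.X_in[OF x] by (simp add: M.tmul_assoc M.tp_in ee M.tmul_one)
      then have "tsub S x (tmul S (tmul S x ?e') ?e) = tzero S" using M.X_in[OF x] by (simp add: M.tsub_self)
      then show ?thesis using b0 M.X_zero by metis
    qed
    have c2: "b \<in> Xfil S v 1" if b: "b \<in> Xfil S v 0" "tmul S b ?e \<in> Xfil S v (i + 1)" for b
    proof -
      have "tmul S (tmul S b ?e) ?e' = b"
        using M.X_in[OF b(1)] by (simp add: M.tmul_assoc M.tp_in ee M.tmul_one)
      moreover have "tmul S (tmul S b ?e) ?e' \<in> Xfil S v (i + 1 + - i)" by (rule M.X_mul[OF b(2) e'])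
      ultimately show ?thesis by simp
    qed
    show ?thesis using e c1 c2 by blast
  qed
  have p6: "Xfil S v i = {tsum S y n | y. \<forall>l<n. y l \<in> otens S v {\<pi> ^ l} (mpow v (i - int l))}"
    by (rule M.item3a)
  have p7: "\<forall>y. (\<forall>l<n. y l \<in> otens S v {\<pi> ^ l} (mpow v (i - int l))) \<longrightarrow> tsum S y n = tzero S
            \<longrightarrow> (\<forall>l<n. y l = tzero S)"
    using M.item3b by blast
  have p8: "\<forall>\<epsilon>\<in>vunits v. tsub S (tp S \<epsilon> (inverse \<epsilon>)) (tone S) \<in> Xfil S v 1"
  proof
    fix \<epsilon> :: 'a assume "\<epsilon> \<in> vunits v"
    then have e: "\<epsilon> \<noteq> 0" "v \<epsilon> = 0" by (auto simp: vunits_def)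
    show "tsub S (tp S \<epsilon> (inverse \<epsilon>)) (tone S) \<in> Xfil S v 1"
      by (rule M.rX_eq_imp[OF M.unit_gen[OF e(1)] M.tone_X0]) (simp add: M.rX_unit[OF e(1)] e(2) M.rX_tone one0)
  qed
  have p9: "\<forall>x. x \<noteq> 0 \<longrightarrow> (\<forall>\<epsilon>1\<in>vunits v. \<forall>\<epsilon>2\<in>vunits v.
           tsub S (tp S (\<epsilon>1 * x) (\<epsilon>2 * inverse x))
                  (tmul S (tp S (\<epsilon>1 * \<epsilon>2) 1) (tpowi S (tp S \<pi> (inverse \<pi>)) (v x)))
             \<in> Xfil S v 1)"
  proof (intro allI impI ballI)
    fix x \<epsilon>1 \<epsilon>2 :: 'a assume x: "x \<noteq> 0" and u: "\<epsilon>1 \<in> vunits v" "\<epsilon>2 \<in> vunits v"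
    then have e: "\<epsilon>1 \<noteq> 0" "v \<epsilon>1 = 0" "\<epsilon>2 \<noteq> 0" "v \<epsilon>2 = 0" by (auto simp: vunits_def)
    obtain a where a: "a \<noteq> 0" "v a = v x" "tpowi S M.Tpi (v x) = tp S a (inverse a)"
      using M.tpowi_Tpi by blast
    have B: "tmul S (tp S (\<epsilon>1 * \<epsilon>2) 1) (tpowi S (tp S \<pi> (inverse \<pi>)) (v x)) = tp S (\<epsilon>1 * \<epsilon>2 * a) (inverse a)"
      using a(3) by (simp add: M.Tpi_def M.tp_mul)
    have v12a: "v (\<epsilon>1 * \<epsilon>2 * a) = v x" using e a by (simp add: M.v_mult)
    have Bm: "\<epsilon>1 * \<epsilon>2 * a \<in> mpow v (v x)" "inverse a \<in> mpow v (- v x)"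
      using v12a a e by (auto simp: mpow_def M.v_inv)
    have v1x: "v (\<epsilon>1 * x) = v x" using e x by (simp add: M.v_mult)
    have Am: "\<epsilon>1 * x \<in> mpow v (v x)" "\<epsilon>2 * inverse x \<in> mpow v (- v x)"
      using v1x e x by (auto simp: mpow_def M.v_inv M.v_mult)
    have A0: "tp S (\<epsilon>1 * x) (\<epsilon>2 * inverse x) \<in> Xfil S v 0" using M.X_gen[OF Am(1), of _ 0] Am(2) by simp
    have B0: "tp S (\<epsilon>1 * \<epsilon>2 * a) (inverse a) \<in> Xfil S v 0" using M.X_gen[OF Bm(1), of _ 0] Bm(2) by simp
    have rA: "M.rX (tp S (\<epsilon>1 * x) (\<epsilon>2 * inverse x)) = monom (res (\<epsilon>1 * \<epsilon>2)) (nat (v x mod int n))"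
    proof -
      have eq: "\<epsilon>1 * x * (\<epsilon>2 * inverse x) = \<epsilon>1 * \<epsilon>2" using x by (simp add: field_simps)
      have "M.rX (tp S (\<epsilon>1 * x) (\<epsilon>2 * inverse x)) = monom (res (\<epsilon>1 * x * (\<epsilon>2 * inverse x))) (nat (v (\<epsilon>1 * x) mod int n))"
        by (rule M.rX_gen[OF Am])
      also have "\<dots> = monom (res (\<epsilon>1 * \<epsilon>2)) (nat (v x mod int n))" by (simp only: eq v1x)
      finally show ?thesis .
    qed
    have rB: "M.rX (tp S (\<epsilon>1 * \<epsilon>2 * a) (inverse a)) = monom (res (\<epsilon>1 * \<epsilon>2)) (nat (v x mod int n))"
    proof -
      have eq: "\<epsilon>1 * \<epsilon>2 * a * inverse a = \<epsilon>1 * \<epsilon>2" using a by (simp add: field_simps)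
      have "M.rX (tp S (\<epsilon>1 * \<epsilon>2 * a) (inverse a)) = monom (res (\<epsilon>1 * \<epsilon>2 * a * inverse a)) (nat (v (\<epsilon>1 * \<epsilon>2 * a) mod int n))"
        by (rule M.rX_gen[OF Bm])
      also have "\<dots> = monom (res (\<epsilon>1 * \<epsilon>2)) (nat (v x mod int n))" by (simp only: eq v12a)
      finally show ?thesis .
    qed
    show "tsub S (tp S (\<epsilon>1 * x) (\<epsilon>2 * inverse x))
                  (tmul S (tp S (\<epsilon>1 * \<epsilon>2) 1) (tpowi S (tp S \<pi> (inverse \<pi>)) (v x))) \<in> Xfil S v 1"
      unfolding B by (rule M.rX_eq_imp[OF A0 B0]) (simp add: rA rB)
  qed
  have p10: "\<forall>x. x \<noteq> 0 \<longrightarrow> int n dvd v x \<longrightarrow> tsub S (tp S x (inverse x)) (tone S) \<in> Xfil S v 1"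
  proof (intro allI impI)
    fix x :: 'a assume x: "x \<noteq> 0" "int n dvd v x"
    show "tsub S (tp S x (inverse x)) (tone S) \<in> Xfil S v 1"
      by (rule M.rX_eq_imp[OF M.unit_gen[OF x(1)] M.tone_X0]) (use x in \<open>simp add: M.rX_unit M.rX_tone one0\<close>)
  qed
  have p11: "\<forall>\<pi>1 \<pi>2. \<pi>1 \<noteq> 0 \<longrightarrow> v \<pi>1 = 1 \<longrightarrow> \<pi>2 \<noteq> 0 \<longrightarrow> v \<pi>2 = 1 \<longrightarrow>
           tsub S (tp S \<pi>1 (inverse \<pi>1)) (tp S \<pi>2 (inverse \<pi>2)) \<in> Xfil S v 1"
  proof (intro allI impI)
    fix \<pi>1 \<pi>2 :: 'a assume p: "\<pi>1 \<noteq> 0" "v \<pi>1 = 1" "\<pi>2 \<noteq> 0" "v \<pi>2 = 1"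
    show "tsub S (tp S \<pi>1 (inverse \<pi>1)) (tp S \<pi>2 (inverse \<pi>2)) \<in> Xfil S v 1"
      by (rule M.rX_eq_imp[OF M.unit_gen[OF p(1)] M.unit_gen[OF p(3)]]) (simp add: M.rX_unit p)
  qed
  have p12: "bij_betw (tswap S) (tcarrier S) (tcarrier S)" by (rule M.tswap_bij)
  have p13: "\<forall>x\<in>tcarrier S. \<forall>y\<in>tcarrier S.
           tswap S (tadd S x y) = tadd S (tswap S x) (tswap S y)
         \<and> tswap S (tmul S x y) = tmul S (tswap S x) (tswap S y)"
    using M.tswap_add M.tswap_mul by blast
  have p14: "tswap S (tone S) = tone S" by (rule M.tswap_one)
  have p15: "\<forall>k. tswap S ` Xfil S v k = Xfil S v k" using M.tswap_image by blast
  have p16: "\<exists>r. is_rX S v res n \<pi> r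
          \<and> (\<forall>r'. is_rX S v res n \<pi> r' \<longrightarrow> (\<forall>\<alpha>\<in>Xfil S v 0. r' \<alpha> = r \<alpha>))
          \<and> (\<forall>\<pi>'. \<pi>' \<noteq> 0 \<longrightarrow> v \<pi>' = 1 \<longrightarrow> is_rX S v res n \<pi>' r)
          \<and> (\<forall>\<alpha>\<in>Xfil S v 0. r (tswap S \<alpha>) = pcompose (r \<alpha>) (monom 1 (n - 1)) mod (monom 1 n - 1))"
  proof (intro exI[of _ M.rX] conjI allI impI ballI)
    show "is_rX S v res n \<pi> M.rX" by (rule M.is_rX_any[OF unif])
    show "r' \<alpha> = M.rX \<alpha>" if "is_rX S v res n \<pi> r'" "\<alpha> \<in> Xfil S v 0" for r' \<alpha>
      by (rule M.rX_unique[OF that])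
    show "is_rX S v res n p M.rX" if "p \<noteq> 0" "v p = 1" for p by (rule M.is_rX_any[OF that])
    show "M.rX (tswap S \<alpha>) = pcompose (M.rX \<alpha>) (monom 1 (n - 1)) mod (monom 1 n - 1)"
      if "\<alpha> \<in> Xfil S v 0" for \<alpha>
      using M.rX_swap[OF that] by (simp add: M.fpol_def)
  qed
  show ?thesis using p1 p2 p3 p4 p5 p6 p7 p8 p9 p10 p11 p12 p13 p14 p15 p16 by blast
qed

end
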